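(* Suppose that Assumption A1 holds for some $T_1,\mathcal{N}_1$ and Assumption A2 holds for some $T_2,\mathcal{N}_2$, with $M_2=\begin{pmatrix}M_{21}&M_{22}\\ M_{23}&M_{24}\end{pmatrix}$ ($M_{21}\in\mathbb{R}^{n_q\times n_q}$, $M_{24}\in\mathbb{R}^{n_p\times n_p}$) a $\delta$-MM for $p$ and $M_{24}<0$. Suppose there exist $\alpha_1,\alpha_2,\mu_1,\mu_2>0$ and matrices $R_1,R_2,R_3,R_4$, $P_1=P_1^\top>0$, $P_2=P_2^\top>0$, $X_1=X_1^\top>0$, $Y_1=Y_1^\top$, $X_2=X_2^\top>0$, $Y_2=Y_2^\top>0$ with $(X_1,Y_1)\in\mathcal{N}_1$, $(X_2,Y_2)\in\mathcal{N}_2$ and \[ \begin{pmatrix}\Phi-\varphi^\top Y_1\varphi & \phi^\top\\ \phi & -X_1\end{pmatrix}\leq 0,\qquad \begin{pmatrix}\Psi-\varphi^\top Y_2\varphi & \psi^\top\\ \psi & -X_2\end{pmatrix}\leq 0, \] where $\Phi=\begin{pmatrix}\Phi_0 & -P_1\tilde E_1 & P_1 E_w+R_1F_w\\ * & \mathbf{0} & \mathbf{0}\\ * & * & -\mu_1I\end{pmatrix}$, $\Phi_0=\tilde A_1^\top P_1+P_1\tilde A_1+C^\top R_1^\top+R_1C+\alpha_1P_1$, $\Psi=\begin{pmatrix}\Psi_0 & \tilde E_2Y_2+BR_4 & E_w\\ * & \mathbf{0} & \mathbf{0}\\ * & * & -\mu_2I\end{pmatrix}$, $\Psi_0=\tilde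 A_2P_2+P_2\tilde A_2^\top+BR_3+R_3^\top B^\top+\alpha_2P_2$, $\phi=(-(X_1\Gamma_{11}C_q+R_2C),\ X_1\Gamma_{12},\ -R_2F_w)$, $\varphi=(\mathbf{0}_{n_p\times n_x},I_{n_p},\mathbf{0}_{n_p\times n_w})$, $\psi=(\Gamma_{21}C_qP_2,\ \Gamma_{22}Y_2,\ \mathbf{0}_{n_q\times n_w})$, $\tilde A_i=A-ET_{i4}^{-1}T_{i3}C_q$, $\tilde E_i=ET_{i4}^{-1}$, $\Gamma_{i1}=T_{i1}-T_{i2}T_{i4}^{-1}T_{i3}$, $\Gamma_{i2}=T_{i2}T_{i4}^{-1}$ ($i=1,2$). If $L_1=\Gamma_{11}^{-1}X_1^{-1}R_2$, $L_2=P_1^{-1}R_1+ET_{14}^{-1}T_{13}L_1$, $K_1=R_3P_2^{-1}+K_2T_{24}^{-1}T_{23}C_q$, $K_2=R_4Y_2^{-1}T_{24}$, then the closed-loop system is ISS w.r.t. $w$.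
   Context: Consider the nonlinear system $\dot x=Ax+Bu+Ep(q)+E_ww$, $y=Cx+Du+F_ww$, $q=C_qx$, with $x\in\mathbb{R}^{n_x}$, $u\in\mathbb{R}^{n_u}$, $y\in\mathbb{R}^{n_y}$, $w\in\mathbb{R}^{n_w}$, and $p:\mathbb{R}^{n_q}\to\mathbb{R}^{n_p}$, $p(\mathbf{0})=\mathbf{0}$. A symmetric $M$ is a $\delta$-MM for $p$ if $\begin{pmatrix}\delta q\\ \delta p\end{pmatrix}^\top M\begin{pmatrix}\delta q\\ \delta p\end{pmatrix}\geq0$ for all $q_1,q_2$, with $\delta q=q_2-q_1$, $\delta p=p(q_2)-p(q_1)$. Assumption A1: there exist a set $\mathcal{N}_1$ of pairs $(X_1,Y_1)$, $X_1\in\mathbb{R}^{n_q\times n_q}$, $Y_1\in\mathbb{R}^{n_p\times n_p}$ symmetric, and an invertible $T_1=\begin{pmatrix}T_{11}&T_{12}\\ T_{13}&T_{14}\end{pmatrix}$ with $T_{14}\in\mathbb{R}^{n_p\times n_p}$ invertible, such that $M_1=T_1^\top\begin{pmatrix}X_1&\mathbf{0}\\ \mathbf{0}&-Y_1\end{pmatrix}T_1$ is a $\delta$-MM of $p$ for all $(X_1,Y_1)\in\mathcal{N}_1$. Assumption A2: there exist a set $\mathcal{N}_2$ of pairs $(X_2,Y_2)$, $X_2\in\mathbb{R}^{n_q\times n_q}$, $Y_2\in\mathbb{R}^{n_p\times n_p}$ symmetric and invertible, and an invertible $T_2=\begin{pmatrix}T_{21}&T_{22}\\ T_{23}&T_{24}\end{pmatrix}$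 with $T_{24}$ invertible, such that $M_2=T_2^\top\begin{pmatrix}X_2^{-1}&\mathbf{0}\\ \mathbf{0}&-Y_2^{-1}\end{pmatrix}T_2$ is a $\delta$-MM of $p$ for all $(X_2,Y_2)\in\mathcal{N}_2$. Observer: $\dot{\hat x}=A\hat x+Bu+Ep(\hat q+L_1(\hat y-y))+L_2(\hat y-y)$, $\hat y=C\hat x+Du$, $\hat q=C_q\hat x$; controller $u=K_1\hat x+K_2p(C_q\hat x)$. With $e=x-\hat x$, the closed loop is $\dot x=(A+BK_1)x+(E+BK_2)p-B\Delta k+E_ww$, $\dot e=(A+L_2C)e-E\delta p+(E_w+L_2F_w)w$, where $\Delta k=K_1e-K_2(p(\hat q)-p(q))$, $\delta p=p(q+\delta q)-p(q)$, $\delta q=-(C_q+L_1C)e-L_1F_ww$. ISS w.r.t. $w$ means there exist $\beta\in\mathcal{KL}$, $\gamma\in\mathcal{K}$ with $\|(x,e)(t)\|\leq\beta(\|(x,e)(0)\|,t)+\gamma(\|w\|_\infty)$. *)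

theory Defs
  imports "HOL-Analysis.Analysis"
begin

section \<open>Block matrices over sum index types\<close>

definition blk :: "real^'b::finite^'a::finite \<Rightarrow> real^'d^'a \<Rightarrow> real^'b^'c \<Rightarrow> real^'d::finite^'c::finite \<Rightarrow> real^('b + 'd)^('a + 'c)" where
  "blk M11 M12 M21 M22 = (\<chi> i j. case i of
      Inl a \<Rightarrow> (case j of Inl b \<Rightarrow> M11 $ a $ b | Inr d \<Rightarrow> M12 $ a $ d)
    | Inr c \<Rightarrow> (case j of Inl b \<Rightarrow> M21 $ c $ b | Inr d \<Rightarrow> M22 $ c $ d))"

definition hcat :: "real^'b^'a \<Rightarrow> real^'d^'a \<Rightarrow> real^('b + 'd)^'a" where
  "hcat M N = (\<chi> i j. case j of Inl b \<Rightarrow> M $ i $ b | Inr d \<Rightarrow> N $ i $ d)"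

definition vcat :: "real^'a \<Rightarrow> real^'b \<Rightarrow> real^('a + 'b)" where
  "vcat u v = (\<chi> i. case i of Inl a \<Rightarrow> u $ a | Inr b \<Rightarrow> v $ b)"

text \<open>Blocks of a 2x2 block matrix T = (T1 T2; T3 T4), numbered as in the paper.\<close>
definition blk1 :: "real^('b::finite + 'd::finite)^('a::finite + 'c::finite) \<Rightarrow> real^'b^'a" where
  "blk1 T = (\<chi> i j. T $ Inl i $ Inl j)"
definition blk2 :: "real^('b::finite + 'd::finite)^('a::finite + 'c::finite) \<Rightarrow> real^'d^'a" where
  "blk2 T = (\<chi> i j. T $ Inl i $ Inr j)"
definition blk3 :: "real^('b::finite + 'd::finite)^('a::finite + 'c::finite) \<Rightarrow> real^'b^'c" where
  "blk3 T = (\<chi> i j. T $ Inr i $ Inl j)"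
definition blk4 :: "real^('b::finite + 'd::finite)^('a::finite + 'c::finite) \<Rightarrow> real^'d^'c" where
  "blk4 T = (\<chi> i j. T $ Inr i $ Inr j)"

section \<open>Matrix (semi)definiteness\<close>

definition sym_mat :: "real^'n^'n \<Rightarrow> bool" where
  "sym_mat M \<longleftrightarrow> transpose M = M"

definition pos_def :: "real^'n^'n \<Rightarrow> bool" where
  "pos_def M \<longleftrightarrow> sym_mat M \<and> (\<forall>v. v \<noteq> 0 \<longrightarrow> 0 < v \<bullet> (M *v v))"

definition neg_def :: "real^'n^'n \<Rightarrow> bool" where
  "neg_def M \<longleftrightarrow> pos_def (- M)"

text \<open>M \<le> 0 (negative semidefinite), for a (symmetric) matrix M.\<close>
definition neg_semidef :: "real^'n^'n \<Rightarrow> bool" where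
  "neg_semidef M \<longleftrightarrow> (\<forall>v. v \<bullet> (M *v v) \<le> 0)"

section \<open>Incremental multiplier matrices\<close>

definition delta_MM :: "(real^'q::finite \<Rightarrow> real^'p::finite) \<Rightarrow> real^('q + 'p)^('q + 'p) \<Rightarrow> bool" where
  "delta_MM p M \<longleftrightarrow> (\<forall>q1 q2. let z = vcat (q2 - q1) (p q2 - p q1) in 0 \<le> z \<bullet> (M *v z))"

definition assumption_A1 ::
  "(real^'q::finite \<Rightarrow> real^'p::finite) \<Rightarrow> ((real^'q^'q) \<times> (real^'p^'p)) set \<Rightarrow> real^('q + 'p)^('q + 'p) \<Rightarrow> bool" where
  "assumption_A1 p N1 T1 \<longleftrightarrow> invertible T1 \<and> invertible (blk4 T1) \<and>
     (\<forall>(X, Y) \<in> N1. sym_mat X \<and> sym_mat Y \<and>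
        delta_MM p (transpose T1 ** blk X 0 0 (- Y) ** T1))"

definition assumption_A2 ::
  "(real^'q::finite \<Rightarrow> real^'p::finite) \<Rightarrow> ((real^'q^'q) \<times> (real^'p^'p)) set \<Rightarrow> real^('q + 'p)^('q + 'p) \<Rightarrow> bool" where
  "assumption_A2 p N2 T2 \<longleftrightarrow> invertible T2 \<and> invertible (blk4 T2) \<and>
     (\<forall>(X, Y) \<in> N2. sym_mat X \<and> sym_mat Y \<and> invertible X \<and> invertible Y \<and>
        delta_MM p (transpose T2 ** blk (matrix_inv X) 0 0 (- matrix_inv Y) ** T2))"

section \<open>Derived matrices\<close>

definition Atil :: "real^'x::finite^'x \<Rightarrow> real^'p::finite^'x \<Rightarrow> real^'x^'q::finite \<Rightarrow> real^('q + 'p)^('q + 'p) \<Rightarrow> real^'x^'x" where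
  "Atil A E Cq T = A - E ** matrix_inv (blk4 T) ** blk3 T ** Cq"

definition Etil :: "real^'p::finite^'x::finite \<Rightarrow> real^('q::finite + 'p)^('q + 'p) \<Rightarrow> real^'p^'x" where
  "Etil E T = E ** matrix_inv (blk4 T)"

definition Gam1 :: "real^('q::finite + 'p::finite)^('q + 'p) \<Rightarrow> real^'q^'q" where
  "Gam1 T = blk1 T - blk2 T ** matrix_inv (blk4 T) ** blk3 T"

definition Gam2 :: "real^('q::finite + 'p::finite)^('q + 'p) \<Rightarrow> real^'p^'q" where
  "Gam2 T = blk2 T ** matrix_inv (blk4 T)"

text \<open>The selector varphi = (0, I, 0).\<close>
definition varphi :: "real^('x::finite + ('p::finite + 'w::finite))^'p" where
  "varphi = hcat (0 :: real^'x^'p) (hcat (mat 1 :: real^'p^'p) (0 :: real^'w^'p))"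

text \<open>First LMI (observer design).\<close>
definition LMI1 ::
  "real^'x::finite^'x \<Rightarrow> real^'p::finite^'x \<Rightarrow> real^'w::finite^'x \<Rightarrow> real^'x^'y::finite \<Rightarrow> real^'w^'y \<Rightarrow> real^'x^'q::finite \<Rightarrow>
   real^('q + 'p)^('q + 'p) \<Rightarrow> real \<Rightarrow> real \<Rightarrow> real^'x^'x \<Rightarrow> real^'y^'x \<Rightarrow> real^'y^'q \<Rightarrow>
   real^'q^'q \<Rightarrow> real^'p^'p \<Rightarrow> real^(('x + ('p + 'w)) + 'q)^(('x + ('p + 'w)) + 'q)" where
  "LMI1 A E Ew C Fw Cq T1 \<alpha>1 \<mu>1 P1 R1 R2 X1 Y1 =
    (let At = Atil A E Cq T1; Et = Etil E T1;
         Phi0 = transpose At ** P1 + P1 ** At + transpose C ** transpose R1 + R1 ** C + \<alpha>1 *\<^sub>R P1;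
         Row = hcat (- (P1 ** Et)) (P1 ** Ew + R1 ** Fw);
         Phi = blk Phi0 Row (transpose Row) (blk (0 :: real^'p^'p) 0 0 (- (\<mu>1 *\<^sub>R mat 1)));
         phi = hcat (- (X1 ** Gam1 T1 ** Cq + R2 ** C)) (hcat (X1 ** Gam2 T1) (- (R2 ** Fw)))
     in blk (Phi - transpose varphi ** Y1 ** varphi) (transpose phi) phi (- X1))"

text \<open>Second LMI (controller design).\<close>
definition LMI2 ::
  "real^'x::finite^'x \<Rightarrow> real^'u::finite^'x \<Rightarrow> real^'p::finite^'x \<Rightarrow> real^'w::finite^'x \<Rightarrow> real^'x^'q::finite \<Rightarrow>
   real^('q + 'p)^('q + 'p) \<Rightarrow> real \<Rightarrow> real \<Rightarrow> real^'x^'x \<Rightarrow> real^'x^'u \<Rightarrow> real^'p^'u \<Rightarrow>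
   real^'q^'q \<Rightarrow> real^'p^'p \<Rightarrow> real^(('x + ('p + 'w)) + 'q)^(('x + ('p + 'w)) + 'q)" where
  "LMI2 A B E Ew Cq T2 \<alpha>2 \<mu>2 P2 R3 R4 X2 Y2 =
    (let At = Atil A E Cq T2; Et = Etil E T2;
         Psi0 = At ** P2 + P2 ** transpose At + B ** R3 + transpose R3 ** transpose B + \<alpha>2 *\<^sub>R P2;
         Row = hcat (Et ** Y2 + B ** R4) Ew;
         Psi = blk Psi0 Row (transpose Row) (blk (0 :: real^'p^'p) 0 0 (- (\<mu>2 *\<^sub>R mat 1)));
         psi = hcat (Gam1 T2 ** Cq ** P2) (hcat (Gam2 T2 ** Y2) (0 :: real^'w^'q))
     in blk (Psi - transpose varphi ** Y2 ** varphi) (transpose psi) psi (- X2))"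

section \<open>Comparison functions and ISS\<close>

definition class_K :: "(real \<Rightarrow> real) \<Rightarrow> bool" where
  "class_K \<gamma> \<longleftrightarrow> continuous_on {0..} \<gamma> \<and> \<gamma> 0 = 0 \<and> strict_mono_on {0..} \<gamma>"

definition class_KL :: "(real \<Rightarrow> real \<Rightarrow> real) \<Rightarrow> bool" where
  "class_KL \<beta> \<longleftrightarrow> continuous_on ({0..} \<times> {0..}) (\<lambda>(r, t). \<beta> r t) \<and>
     (\<forall>t \<ge> 0. class_K (\<lambda>r. \<beta> r t)) \<and>
     (\<forall>r \<ge> 0. (\<forall>s t. 0 \<le> s \<longrightarrow> s \<le> t \<longrightarrow> \<beta> r t \<le> \<beta> r s) \<and> (\<beta> r \<longlongrightarrow> 0) at_top)"

text \<open>Solutions of the closed loop in the (x, e) coordinates on [0, \<infinity>), in integral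
  (Caratheodory) sense, driven by the disturbance w.\<close>
definition closed_loop_sol ::
  "real^'x::finite^'x \<Rightarrow> real^'u::finite^'x \<Rightarrow> real^'p::finite^'x \<Rightarrow> real^'w::finite^'x \<Rightarrow> real^'x^'y::finite \<Rightarrow> real^'w^'y \<Rightarrow> real^'x^'q::finite \<Rightarrow>
   (real^'q \<Rightarrow> real^'p) \<Rightarrow> real^'x^'u \<Rightarrow> real^'p^'u \<Rightarrow> real^'y^'q \<Rightarrow> real^'y^'x \<Rightarrow>
   (real \<Rightarrow> real^'w) \<Rightarrow> (real \<Rightarrow> real^'x) \<Rightarrow> (real \<Rightarrow> real^'x) \<Rightarrow> bool" where
  "closed_loop_sol A B E Ew C Fw Cq p K1 K2 L1 L2 w x e \<longleftrightarrow>
    (let q = (\<lambda>s. Cq *v x s);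
         dk = (\<lambda>s. K1 *v e s - K2 *v (p (Cq *v (x s - e s)) - p (q s)));
         dq = (\<lambda>s. - ((Cq + L1 ** C) *v e s) - L1 *v (Fw *v w s));
         dp = (\<lambda>s. p (q s + dq s) - p (q s));
         fx = (\<lambda>s. (A + B ** K1) *v x s + (E + B ** K2) *v p (q s) - B *v dk s + Ew *v w s);
         fe = (\<lambda>s. (A + L2 ** C) *v e s - E *v dp s + (Ew + L2 ** Fw) *v w s)
     in \<forall>t \<ge> 0. (fx has_integral (x t - x 0)) {0..t} \<and> (fe has_integral (e t - e 0)) {0..t})"

text \<open>ISS w.r.t. w: one KL-function and one K-function bound every solution defined on
  [0, \<infinity>) for every bounded disturbance; the norm of (x, e) is the Euclidean norm.\<close>
definition ISS_wrt ::
  "((real \<Rightarrow> real^'w::finite) \<Rightarrow> (real \<Rightarrow> real^'x::finite) \<Rightarrow> (real \<Rightarrow> real^'x) \<Rightarrow> bool) \<Rightarrow> bool" where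
  "ISS_wrt sol \<longleftrightarrow> (\<exists>\<beta> \<gamma>. class_KL \<beta> \<and> class_K \<gamma> \<and>
     (\<forall>w x e. bounded (w ` {0..}) \<and> sol w x e \<longrightarrow>
        (\<forall>t \<ge> 0. norm (x t, e t) \<le> \<beta> (norm (x 0, e 0)) t + \<gamma> (SUP s\<in>{0..}. norm (w s)))))"

end

theory Submission
  imports Defs
begin

(* from Blk.thy *)
lemma sum_UNIV_plus: "sum f (UNIV :: ('a::finite + 'b::finite) set) = sum (\<lambda>a. f (Inl a)) UNIV + sum (\<lambda>b. f (Inr b)) UNIV"
proof -
  have "sum f (UNIV :: ('a + 'b) set) = sum f (Inl ` UNIV) + sum f (Inr ` UNIV)"
    by (subst UNIV_sum, rule sum.union_disjoint) auto
  also have "\<dots> = sum (\<lambda>a. f (Inl a)) UNIV + sum (\<lambda>b. f (Inr b)) UNIV"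
    by (simp add: sum.reindex)
  finally show ?thesis .
qed

lemma blk_mult_vcat: "blk M11 M12 M21 M22 *v vcat a c = vcat (M11 *v a + M12 *v c) (M21 *v a + M22 *v c)"
  by (auto simp: vec_eq_iff blk_def vcat_def matrix_vector_mult_def sum_UNIV_plus split: sum.splits)

lemma hcat_mult_vcat: "hcat M N *v vcat a c = M *v a + N *v c"
  by (auto simp: vec_eq_iff hcat_def vcat_def matrix_vector_mult_def sum_UNIV_plus)

lemma inner_vcat: "vcat a b \<bullet> vcat c d = a \<bullet> c + b \<bullet> d"
  by (simp add: inner_vec_def vcat_def sum_UNIV_plus)

lemma transpose_hcat_mult: "transpose (hcat M N) *v v = vcat (transpose M *v v) (transpose N *v v)"
  by (auto simp: vec_eq_iff hcat_def vcat_def transpose_def matrix_vector_mult_def split: sum.splits)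

lemma transpose_blk: "transpose (blk M11 M12 M21 M22) = blk (transpose M11) (transpose M21) (transpose M12) (transpose M22)"
  by (auto simp: vec_eq_iff blk_def transpose_def split: sum.splits)

lemma blk_blocks: "blk (blk1 T) (blk2 T) (blk3 T) (blk4 T) = T"
  by (auto simp: vec_eq_iff blk_def blk1_def blk2_def blk3_def blk4_def split: sum.splits)

lemma T_mult_vcat: "T *v vcat a c = vcat (blk1 T *v a + blk2 T *v c) (blk3 T *v a + blk4 T *v c)"
  by (metis blk_blocks blk_mult_vcat)

lemma vcat_zero[simp]: "vcat 0 0 = 0"
  by (auto simp: vec_eq_iff vcat_def split: sum.splits)

lemma vcat_eq: "vcat a b = vcat c d \<longleftrightarrow> a = c \<and> b = d"
  by (auto simp: vec_eq_iff vcat_def split: sum.splits)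

lemma inner_transpose: "(x::real^'n) \<bullet> (transpose M *v y) = (M *v x) \<bullet> y"
  by (metis dot_lmul_matrix inner_commute transpose_matrix_vector)

lemma inner_vmul: "(x::real^'n) \<bullet> (y v* M) = (M *v x) \<bullet> y"
  by (metis inner_transpose transpose_matrix_vector)

lemma sym_inner: "sym_mat M \<Longrightarrow> (x::real^'n) \<bullet> (M *v y) = (M *v x) \<bullet> y"
  by (metis inner_transpose sym_mat_def)

lemma inv_mat: "invertible M \<Longrightarrow> M ** matrix_inv M = mat 1 \<and> matrix_inv M ** M = mat 1"
  unfolding invertible_def matrix_inv_def by (rule someI_ex)

lemma inv_vec1: "invertible M \<Longrightarrow> M *v (matrix_inv M *v v) = v"
  by (metis inv_mat matrix_vector_mul_assoc matrix_vector_mul_lid)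
lemma inv_vec2: "invertible M \<Longrightarrow> matrix_inv M *v (M *v v) = v"
  by (metis inv_mat matrix_vector_mul_assoc matrix_vector_mul_lid)

lemma mv_uminus_l: "(- A) *v (x::real^'n) = - (A *v x)"
  by (simp add: vec_eq_iff matrix_vector_mult_def sum_negf)
lemma mv_uminus_r: "A *v (- (x::real^'n)) = - (A *v x)"
  by (simp add: vec_eq_iff matrix_vector_mult_def sum_negf)
lemma mv_scaleR_l: "(c *\<^sub>R A) *v (x::real^'n) = c *\<^sub>R (A *v x)"
  by (simp add: vec_eq_iff matrix_vector_mult_def sum_distrib_left mult.assoc)

lemmas mv = matrix_vector_mul_assoc[symmetric] matrix_vector_mult_add_rdistrib matrix_vector_mult_diff_rdistrib
  matrix_vector_right_distrib matrix_vector_mult_diff_distrib matrix_vector_mult_scaleR mv_uminus_l mv_uminus_r mv_scaleR_l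

lemma ker_invertible: fixes A :: "real^'n^'n" assumes "\<And>v. A *v v = 0 \<Longrightarrow> v = 0" shows "invertible A"
  using assms invertible_left_inverse matrix_left_invertible_ker by blast

lemma pos_def_invertible: "pos_def (M::real^'n^'n) \<Longrightarrow> invertible M"
  by (rule ker_invertible) (metis inner_zero_right less_irrefl pos_def_def)

lemma Gam1_invertible: fixes T :: "real^('q::finite + 'p::finite)^('q + 'p)"
  assumes "invertible T" "invertible (blk4 T)" shows "invertible (Gam1 T)"
proof (rule ker_invertible)
  fix v assume v: "Gam1 T *v v = 0"
  define c where "c = - (matrix_inv (blk4 T) *v (blk3 T *v v))"
  have "T *v vcat v c = vcat (Gam1 T *v v) 0"
    using assms(2) by (simp add: T_mult_vcat c_def Gam1_def mv inv_vec1)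
  then have "T *v vcat v c = 0" using v by simp
  then have "vcat v c = 0" using inj_matrix_vector_mult[OF assms(1)]
    by (metis injD matrix_vector_mult_0_right)
  then show "v = 0" by (metis vcat_eq vcat_zero)
qed

lemma sym_inv: assumes "sym_mat M" "invertible M" shows "sym_mat (matrix_inv M)"
proof -
  have "transpose (matrix_inv M) ** M = mat 1"
    by (metis assms inv_mat matrix_transpose_mul sym_mat_def transpose_mat)
  then have "transpose (matrix_inv M) = matrix_inv M"
    by (metis assms(2) inv_mat matrix_mul_assoc matrix_mul_lid matrix_mul_rid)
  then show ?thesis by (simp add: sym_mat_def)
qed

lemma dMM_quad: assumes "delta_MM p (transpose T ** blk X 0 0 (- Y) ** T)"
  shows "0 \<le> (blk1 T *v (q2 - q1) + blk2 T *v (p q2 - p q1)) \<bullet> (X *v (blk1 T *v (q2 - q1) + blk2 T *v (p q2 - p q1)))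
            - (blk3 T *v (q2 - q1) + blk4 T *v (p q2 - p q1)) \<bullet> (Y *v (blk3 T *v (q2 - q1) + blk4 T *v (p q2 - p q1)))"
proof -
  define z where "z = T *v vcat (q2 - q1) (p q2 - p q1)"
  have zab: "z = vcat (blk1 T *v (q2 - q1) + blk2 T *v (p q2 - p q1)) (blk3 T *v (q2 - q1) + blk4 T *v (p q2 - p q1))"
    by (simp add: z_def T_mult_vcat)
  have "0 \<le> vcat (q2 - q1) (p q2 - p q1) \<bullet> ((transpose T ** blk X 0 0 (- Y) ** T) *v vcat (q2 - q1) (p q2 - p q1))"
    using assms unfolding delta_MM_def Let_def by blast
  also have "\<dots> = z \<bullet> (blk X 0 0 (- Y) *v z)"
    unfolding z_def by (simp only: matrix_vector_mul_assoc[symmetric] inner_transpose)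
  finally show ?thesis
    by (simp add: zab blk_mult_vcat inner_vcat mv_uminus_l)
qed

(* from Obs.thy *)
lemma obs_ineq:
  fixes A :: "real^'x::finite^'x" and E :: "real^'p::finite^'x" and Ew :: "real^'w::finite^'x"
    and C :: "real^'x^'y::finite" and Fw :: "real^'w^'y" and Cq :: "real^'x^'q::finite"
    and p :: "real^'q \<Rightarrow> real^'p" and T1 :: "real^('q + 'p)^('q + 'p)"
    and R1 :: "real^'y^'x" and R2 :: "real^'y^'q" and P1 :: "real^'x^'x" and X1 :: "real^'q^'q" and Y1 :: "real^'p^'p"
    and L1 :: "real^'y^'q" and L2 :: "real^'y^'x"
  assumes A1: "assumption_A1 p N1 T1"
    and P1: "pos_def P1" and X1: "pos_def X1" and Y1: "sym_mat Y1" and N1: "(X1, Y1) \<in> N1"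
    and LMI1: "neg_semidef (LMI1 A E Ew C Fw Cq T1 \<alpha>1 \<mu>1 P1 R1 R2 X1 Y1)"
    and L1: "L1 = matrix_inv (Gam1 T1) ** matrix_inv X1 ** R2"
    and L2: "L2 = matrix_inv P1 ** R1 + E ** matrix_inv (blk4 T1) ** blk3 T1 ** L1"
  shows "2 * ((P1 *v e) \<bullet> ((A + L2 ** C) *v e - E *v (p (q + (- ((Cq + L1 ** C) *v e) - L1 *v (Fw *v w))) - p q)
              + (Ew + L2 ** Fw) *v w)) + \<alpha>1 * (e \<bullet> (P1 *v e)) - \<mu>1 * (w \<bullet> w) \<le> 0"
proof -
  have T1i: "invertible T1" and T4i: "invertible (blk4 T1)" and dmm: "delta_MM p (transpose T1 ** blk X1 0 0 (- Y1) ** T1)"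
    and X1s: "sym_mat X1"
    using A1 N1 by (auto simp: assumption_A1_def)
  have P1i: "invertible P1" using P1 by (rule pos_def_invertible)
  have X1i: "invertible X1" using X1 by (rule pos_def_invertible)
  have P1s: "sym_mat P1" using P1 by (simp add: pos_def_def)
  have G1i: "invertible (Gam1 T1)" using T1i T4i by (rule Gam1_invertible)
  define dq where "dq = - ((Cq + L1 ** C) *v e) - L1 *v (Fw *v w)"
  define dp where "dp = p (q + dq) - p q"
  define fe where "fe = (A + L2 ** C) *v e - E *v dp + (Ew + L2 ** Fw) *v w"
  define a where "a = blk1 T1 *v dq + blk2 T1 *v dp"
  define b where "b = blk3 T1 *v dq + blk4 T1 *v dp"
  have MM: "0 \<le> a \<bullet> (X1 *v a) - b \<bullet> (Y1 *v b)"
    using dMM_quad[OF dmm, of "q + dq" q] by (simp add: a_def b_def dp_def)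
  define At where "At = Atil A E Cq T1"
  define Et where "Et = Etil E T1"
  define Phi0 where "Phi0 = transpose At ** P1 + P1 ** At + transpose C ** transpose R1 + R1 ** C + \<alpha>1 *\<^sub>R P1"
  define Row where "Row = hcat (- (P1 ** Et)) (P1 ** Ew + R1 ** Fw)"
  define Phi where "Phi = blk Phi0 Row (transpose Row) (blk (0 :: real^'p^'p) 0 0 (- (\<mu>1 *\<^sub>R mat 1)))"
  define phi where "phi = hcat (- (X1 ** Gam1 T1 ** Cq + R2 ** C)) (hcat (X1 ** Gam2 T1) (- (R2 ** Fw)))"
  have L: "LMI1 A E Ew C Fw Cq T1 \<alpha>1 \<mu>1 P1 R1 R2 X1 Y1 = blk (Phi - transpose varphi ** Y1 ** varphi) (transpose phi) phi (- X1)"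
    by (simp add: LMI1_def Let_def Phi_def phi_def Phi0_def Row_def At_def Et_def)
  define V where "V = vcat e (vcat b w)"
  have ab: "a = Gam1 T1 *v dq + Gam2 T1 *v b"
    by (simp add: a_def b_def Gam1_def Gam2_def mv inv_vec2[OF T4i])
  have XGL: "X1 *v (Gam1 T1 *v (L1 *v z)) = R2 *v z" for z
    by (simp add: L1 mv inv_vec1[OF G1i] inv_vec1[OF X1i])
  have k1: "phi *v V = X1 *v a"
    by (simp add: phi_def V_def hcat_mult_vcat ab dq_def mv XGL)
  have k2: "(varphi :: real^('x + ('p + 'w))^'p) *v V = b"
    by (simp add: varphi_def V_def hcat_mult_vcat)
  have kP: "P1 *v fe = P1 *v (At *v e) + R1 *v (C *v e) - P1 *v (Et *v b) + P1 *v (Ew *v w) + R1 *v (Fw *v w)"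
    by (simp add: fe_def L2 At_def Et_def Atil_def Etil_def b_def dq_def mv inv_vec1[OF P1i] inv_vec2[OF T4i])
  have k3a: "V \<bullet> (Phi *v V) = e \<bullet> (transpose At *v (P1 *v e)) + e \<bullet> (P1 *v (At *v e)) + e \<bullet> (transpose C *v (transpose R1 *v e))
     + e \<bullet> (R1 *v (C *v e)) + \<alpha>1 * (e \<bullet> (P1 *v e)) - 2 * (e \<bullet> (P1 *v (Et *v b)))
     + 2 * (e \<bullet> (P1 *v (Ew *v w))) + 2 * (e \<bullet> (R1 *v (Fw *v w))) - \<mu>1 * (w \<bullet> w)"
  proof -
    have r1: "Row *v vcat b w = - (P1 *v (Et *v b)) + (P1 *v (Ew *v w) + R1 *v (Fw *v w))"
      by (simp add: Row_def hcat_mult_vcat mv)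
    have r2: "vcat b w \<bullet> (transpose Row *v e) = (Row *v vcat b w) \<bullet> e"
      by (rule inner_transpose)
    have r3: "vcat b w \<bullet> (blk (0 :: real^'p^'p) 0 0 (- (\<mu>1 *\<^sub>R mat 1)) *v vcat b w) = - \<mu>1 * (w \<bullet> w)"
      by (simp add: blk_mult_vcat inner_vcat mv_uminus_l mv_scaleR_l)
    have r4: "e \<bullet> (Phi0 *v e) = e \<bullet> (transpose At *v (P1 *v e)) + e \<bullet> (P1 *v (At *v e)) + e \<bullet> (transpose C *v (transpose R1 *v e))
     + e \<bullet> (R1 *v (C *v e)) + \<alpha>1 * (e \<bullet> (P1 *v e))"
      unfolding Phi0_def
      by (simp only: matrix_vector_mult_add_rdistrib matrix_vector_mul_assoc[symmetric] mv_scaleR_l inner_add_right inner_scaleR_right)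
    have "V \<bullet> (Phi *v V) = e \<bullet> (Phi0 *v e) + e \<bullet> (Row *v vcat b w) + vcat b w \<bullet> (transpose Row *v e)
       + vcat b w \<bullet> (blk (0 :: real^'p^'p) 0 0 (- (\<mu>1 *\<^sub>R mat 1)) *v vcat b w)"
      unfolding V_def Phi_def by (simp only: blk_mult_vcat inner_vcat inner_add_right add.assoc)
    then show ?thesis unfolding r2 r3 r4 r1
      by (simp add: inner_add_right inner_add_left inner_diff_right inner_minus_right inner_minus_left inner_commute[of _ e])
  qed
  have t1: "e \<bullet> (transpose At *v (P1 *v e)) = e \<bullet> (P1 *v (At *v e))"
    by (metis inner_commute inner_transpose sym_inner[OF P1s])
  have t2: "e \<bullet> (transpose C *v (transpose R1 *v e)) = e \<bullet> (R1 *v (C *v e))"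
    by (metis inner_commute inner_transpose)
  have t3: "(P1 *v e) \<bullet> fe = e \<bullet> (P1 *v fe)"
    by (metis sym_inner[OF P1s])
  have k3: "V \<bullet> (Phi *v V) = 2 * ((P1 *v e) \<bullet> fe) + \<alpha>1 * (e \<bullet> (P1 *v e)) - \<mu>1 * (w \<bullet> w)"
    unfolding k3a t1 t2 t3 kP by (simp add: inner_add_right inner_diff_right)
  have "vcat V a \<bullet> (LMI1 A E Ew C Fw Cq T1 \<alpha>1 \<mu>1 P1 R1 R2 X1 Y1 *v vcat V a) \<le> 0"
    using LMI1 by (simp add: neg_semidef_def)
  also have "vcat V a \<bullet> (LMI1 A E Ew C Fw Cq T1 \<alpha>1 \<mu>1 P1 R1 R2 X1 Y1 *v vcat V a)
     = V \<bullet> (Phi *v V) - (varphi *v V) \<bullet> (Y1 *v (varphi *v V)) + 2 * ((phi *v V) \<bullet> a) - a \<bullet> (X1 *v a)"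
    unfolding L blk_mult_vcat inner_vcat
    by (simp add: matrix_vector_mult_diff_rdistrib mv_uminus_l inner_add_right inner_diff_right
        matrix_vector_mul_assoc[symmetric] inner_vmul inner_commute[of a])
  finally have "V \<bullet> (Phi *v V) - b \<bullet> (Y1 *v b) + 2 * ((X1 *v a) \<bullet> a) - a \<bullet> (X1 *v a) \<le> 0"
    by (simp only: k1 k2)
  then show ?thesis using MM k3 unfolding fe_def dp_def dq_def
    by (simp add: inner_commute[of "X1 *v a"])
qed

(* from Ctrl.thy *)
lemma ctrl_ineq:
  fixes A :: "real^'x::finite^'x" and B :: "real^'u::finite^'x" and E :: "real^'p::finite^'x" and Ew :: "real^'w::finite^'x"
    and Cq :: "real^'x^'q::finite"
    and p :: "real^'q \<Rightarrow> real^'p" and T2 :: "real^('q + 'p)^('q + 'p)"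
    and R3 :: "real^'x^'u" and R4 :: "real^'p^'u" and P2 :: "real^'x^'x" and X2 :: "real^'q^'q" and Y2 :: "real^'p^'p"
    and K1 :: "real^'x^'u" and K2 :: "real^'p^'u"
  assumes p0: "p 0 = 0" and A2: "assumption_A2 p N2 T2"
    and P2: "pos_def P2" and X2: "pos_def X2" and Y2: "pos_def Y2" and N2: "(X2, Y2) \<in> N2"
    and LMI2: "neg_semidef (LMI2 A B E Ew Cq T2 \<alpha>2 \<mu>2 P2 R3 R4 X2 Y2)"
    and K1: "K1 = R3 ** matrix_inv P2 + K2 ** matrix_inv (blk4 T2) ** blk3 T2 ** Cq"
    and K2: "K2 = R4 ** matrix_inv Y2 ** blk4 T2"
  shows "2 * ((matrix_inv P2 *v x) \<bullet> ((A + B ** K1) *v x + (E + B ** K2) *v p (Cq *v x) + Ew *v w))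
          + \<alpha>2 * (x \<bullet> (matrix_inv P2 *v x)) - \<mu>2 * (w \<bullet> w) \<le> 0"
proof -
  have T2i: "invertible T2" and T4i: "invertible (blk4 T2)"
    and dmm: "delta_MM p (transpose T2 ** blk (matrix_inv X2) 0 0 (- matrix_inv Y2) ** T2)"
    using A2 N2 by (auto simp: assumption_A2_def)
  have P2i: "invertible P2" using P2 by (rule pos_def_invertible)
  have X2i: "invertible X2" using X2 by (rule pos_def_invertible)
  have Y2i: "invertible Y2" using Y2 by (rule pos_def_invertible)
  have P2s: "sym_mat P2" and X2s: "sym_mat X2" and Y2s: "sym_mat Y2" using P2 X2 Y2 by (auto simp: pos_def_def)
  have X2is: "sym_mat (matrix_inv X2)" using X2s X2i by (rule sym_inv)
  have Y2is: "sym_mat (matrix_inv Y2)" using Y2s Y2i by (rule sym_inv)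
  define q where "q = Cq *v x"
  define pq where "pq = p q"
  define a where "a = blk1 T2 *v q + blk2 T2 *v pq"
  define b where "b = blk3 T2 *v q + blk4 T2 *v pq"
  have MM: "0 \<le> a \<bullet> (matrix_inv X2 *v a) - b \<bullet> (matrix_inv Y2 *v b)"
    using dMM_quad[OF dmm, of q 0] by (simp add: a_def b_def pq_def p0)
  define z where "z = matrix_inv P2 *v x"
  have xz: "x = P2 *v z" by (simp add: z_def inv_vec1[OF P2i])
  define s where "s = matrix_inv Y2 *v b"
  have bs: "b = Y2 *v s" by (simp add: s_def inv_vec1[OF Y2i])
  define u where "u = matrix_inv X2 *v a"
  have au: "a = X2 *v u" by (simp add: u_def inv_vec1[OF X2i])
  define At where "At = Atil A E Cq T2"
  define Et where "Et = Etil E T2"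
  define Psi0 where "Psi0 = At ** P2 + P2 ** transpose At + B ** R3 + transpose R3 ** transpose B + \<alpha>2 *\<^sub>R P2"
  define Row where "Row = hcat (Et ** Y2 + B ** R4) Ew"
  define Psi where "Psi = blk Psi0 Row (transpose Row) (blk (0 :: real^'p^'p) 0 0 (- (\<mu>2 *\<^sub>R mat 1)))"
  define psi where "psi = hcat (Gam1 T2 ** Cq ** P2) (hcat (Gam2 T2 ** Y2) (0 :: real^'w^'q))"
  have L: "LMI2 A B E Ew Cq T2 \<alpha>2 \<mu>2 P2 R3 R4 X2 Y2 = blk (Psi - transpose varphi ** Y2 ** varphi) (transpose psi) psi (- X2)"
    by (simp add: LMI2_def Let_def Psi_def psi_def Psi0_def Row_def At_def Et_def)
  define V where "V = vcat z (vcat s w)"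
  define fx where "fx = (A + B ** K1) *v x + (E + B ** K2) *v p (Cq *v x) + Ew *v w"
  have ab: "a = Gam1 T2 *v q + Gam2 T2 *v b"
    by (simp add: a_def b_def Gam1_def Gam2_def mv inv_vec2[OF T4i])
  have k1: "psi *v V = a"
    by (simp add: psi_def V_def hcat_mult_vcat ab mv q_def xz bs)
  have k2: "(varphi :: real^('x + ('p + 'w))^'p) *v V = s"
    by (simp add: varphi_def V_def hcat_mult_vcat)
  have kF: "fx = At *v (P2 *v z) + B *v (R3 *v z) + Et *v (Y2 *v s) + B *v (R4 *v s) + Ew *v w"
    unfolding fx_def K1 K2 At_def Et_def Atil_def Etil_def xz[symmetric] bs[symmetric] z_def s_def
    by (simp add: b_def mv inv_vec2[OF T4i] inv_vec2[OF Y2i] inv_vec1[OF T4i] inv_vec1[OF Y2i] inv_vec1[OF P2i] q_def pq_def)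
  have k3a: "V \<bullet> (Psi *v V) = z \<bullet> (Psi0 *v z) + 2 * (z \<bullet> (Row *v vcat s w)) - \<mu>2 * (w \<bullet> w)"
  proof -
    have r2: "vcat s w \<bullet> (transpose Row *v z) = (Row *v vcat s w) \<bullet> z"
      by (rule inner_transpose)
    have r3: "vcat s w \<bullet> (blk (0 :: real^'p^'p) 0 0 (- (\<mu>2 *\<^sub>R mat 1)) *v vcat s w) = - \<mu>2 * (w \<bullet> w)"
      by (simp add: blk_mult_vcat inner_vcat mv_uminus_l mv_scaleR_l)
    have "V \<bullet> (Psi *v V) = z \<bullet> (Psi0 *v z) + z \<bullet> (Row *v vcat s w) + vcat s w \<bullet> (transpose Row *v z)
       + vcat s w \<bullet> (blk (0 :: real^'p^'p) 0 0 (- (\<mu>2 *\<^sub>R mat 1)) *v vcat s w)"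
      unfolding V_def Psi_def by (simp only: blk_mult_vcat inner_vcat inner_add_right add.assoc)
    then show ?thesis unfolding r2 r3 by (simp add: inner_commute[of _ z])
  qed
  have r4: "z \<bullet> (Psi0 *v z) = z \<bullet> (At *v (P2 *v z)) + z \<bullet> (P2 *v (transpose At *v z)) + z \<bullet> (B *v (R3 *v z))
     + z \<bullet> (transpose R3 *v (transpose B *v z)) + \<alpha>2 * (z \<bullet> (P2 *v z))"
    unfolding Psi0_def
    by (simp only: matrix_vector_mult_add_rdistrib matrix_vector_mul_assoc[symmetric] mv_scaleR_l inner_add_right inner_scaleR_right)
  have t1: "z \<bullet> (P2 *v (transpose At *v z)) = z \<bullet> (At *v (P2 *v z))"
    by (metis inner_commute inner_transpose sym_inner[OF P2s])
  have t2: "z \<bullet> (transpose R3 *v (transpose B *v z)) = z \<bullet> (B *v (R3 *v z))"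
    by (metis inner_commute inner_transpose)
  have r1: "Row *v vcat s w = Et *v (Y2 *v s) + B *v (R4 *v s) + Ew *v w"
    by (simp add: Row_def hcat_mult_vcat mv)
  have k3: "V \<bullet> (Psi *v V) = 2 * (z \<bullet> fx) + \<alpha>2 * (x \<bullet> z) - \<mu>2 * (w \<bullet> w)"
    unfolding k3a r4 t1 t2 r1 kF
    by (simp add: inner_add_right xz inner_commute[of "P2 *v z" z])
  have "vcat V u \<bullet> (LMI2 A B E Ew Cq T2 \<alpha>2 \<mu>2 P2 R3 R4 X2 Y2 *v vcat V u) \<le> 0"
    using LMI2 by (simp add: neg_semidef_def)
  also have "vcat V u \<bullet> (LMI2 A B E Ew Cq T2 \<alpha>2 \<mu>2 P2 R3 R4 X2 Y2 *v vcat V u)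
     = V \<bullet> (Psi *v V) - (varphi *v V) \<bullet> (Y2 *v (varphi *v V)) + 2 * ((psi *v V) \<bullet> u) - u \<bullet> (X2 *v u)"
    unfolding L blk_mult_vcat inner_vcat
    by (simp add: matrix_vector_mult_diff_rdistrib mv_uminus_l inner_add_right inner_diff_right
        matrix_vector_mul_assoc[symmetric] inner_vmul inner_commute[of u])
  finally have "V \<bullet> (Psi *v V) - s \<bullet> (Y2 *v s) + 2 * (a \<bullet> u) - u \<bullet> (X2 *v u) \<le> 0"
    by (simp only: k1 k2)
  moreover have "s \<bullet> (Y2 *v s) = b \<bullet> (matrix_inv Y2 *v b)"
    by (simp add: s_def inv_vec1[OF Y2i] inner_commute)
  moreover have "u \<bullet> (X2 *v u) = a \<bullet> (matrix_inv X2 *v a)" "a \<bullet> u = a \<bullet> (matrix_inv X2 *v a)"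
    by (simp_all add: u_def inv_vec1[OF X2i] inner_commute)
  ultimately show ?thesis using MM k3 unfolding fx_def z_def
    by (simp add: inner_commute[of x])
qed

(* from Lip.thy *)
lemma quad_lower:
  fixes M :: "real^'n^'n"
  assumes pos: "\<And>v. v \<noteq> 0 \<Longrightarrow> 0 < v \<bullet> (M *v v)"
  shows "\<exists>c>0. \<forall>v. c * (norm v)\<^sup>2 \<le> v \<bullet> (M *v v)"
proof -
  have cont: "continuous_on (sphere 0 1) (\<lambda>v::real^'n. v \<bullet> (M *v v))"
    by (intro continuous_intros continuous_on_id linear_continuous_on bounded_linear_inner_right) (simp add: matrix_vector_mul_bounded_linear)
  obtain v0 where v0: "v0 \<in> sphere (0::real^'n) 1" and min: "\<And>y. y \<in> sphere 0 1 \<Longrightarrow> v0 \<bullet> (M *v v0) \<le> y \<bullet> (M *v y)"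
    using continuous_attains_inf[OF compact_sphere _ cont] by auto
  define c where "c = v0 \<bullet> (M *v v0)"
  have "v0 \<noteq> 0" using v0 by auto
  then have c0: "c > 0" using pos c_def by auto
  have "c * (norm v)\<^sup>2 \<le> v \<bullet> (M *v v)" for v
  proof (cases "v = 0")
    case True then show ?thesis by simp
  next
    case False
    define u where "u = (1 / norm v) *\<^sub>R v"
    have "u \<in> sphere 0 1" using False by (simp add: u_def)
    then have "c \<le> u \<bullet> (M *v u)" using min c_def by auto
    also have "u \<bullet> (M *v u) = (v \<bullet> (M *v v)) / (norm v)\<^sup>2"
      by (simp add: u_def matrix_vector_mult_scaleR power2_eq_square)
    finally show ?thesis using False by (simp add: field_simps)
  qed
  then show ?thesis using c0 by blast
qed

lemma mat_bound:
  fixes M :: "real^'n^'m"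
  shows "\<exists>K>0. \<forall>y. norm (M *v y) \<le> K * norm y"
  using bounded_linear.pos_bounded[OF matrix_vector_mul_bounded_linear[of M]]
  by (metis mult.commute)

lemma mat_bound_inner:
  fixes M :: "real^'n^'m"
  shows "\<exists>K>0. \<forall>x y. \<bar>x \<bullet> (M *v y)\<bar> \<le> K * norm x * norm y"
proof -
  obtain K where K: "K > 0" "\<And>y. norm (M *v y) \<le> K * norm y" using mat_bound by blast
  have "\<bar>x \<bullet> (M *v y)\<bar> \<le> K * norm x * norm y" for x y
  proof -
    have "\<bar>x \<bullet> (M *v y)\<bar> \<le> norm x * norm (M *v y)" by (rule Cauchy_Schwarz_ineq2)
    also have "\<dots> \<le> norm x * (K * norm y)" by (rule mult_left_mono[OF K(2)]) simp
    finally show ?thesis by (simp add: mult_ac)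
  qed
  then show ?thesis using K by blast
qed

lemma p_lipschitz:
  fixes p :: "real^'q::finite \<Rightarrow> real^'p::finite" and M :: "real^('q + 'p)^('q + 'p)"
  assumes dmm: "delta_MM p M" and neg: "neg_def (blk4 M)"
  shows "\<exists>Lp\<ge>0. \<forall>q1 q2. norm (p q2 - p q1) \<le> Lp * norm (q2 - q1)"
proof -
  have "\<And>v. v \<noteq> 0 \<Longrightarrow> 0 < v \<bullet> ((- blk4 M) *v v)" using neg by (simp add: neg_def_def pos_def_def)
  then obtain c where c: "c > 0" "\<And>v. c * (norm v)\<^sup>2 \<le> v \<bullet> ((- blk4 M) *v v)" using quad_lower by blast
  obtain K1 where K1: "K1 > 0" "\<And>x y. \<bar>x \<bullet> (blk1 M *v y)\<bar> \<le> K1 * norm x * norm y" using mat_bound_inner by blast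
  obtain K2 where K2: "K2 > 0" "\<And>x y. \<bar>x \<bullet> (blk2 M *v y)\<bar> \<le> K2 * norm x * norm y" using mat_bound_inner by blast
  obtain K3 where K3: "K3 > 0" "\<And>x y. \<bar>x \<bullet> (blk3 M *v y)\<bar> \<le> K3 * norm x * norm y" using mat_bound_inner by blast
  define K where "K = K2 + K3"
  define Lp where "Lp = sqrt (2 * K1 / c + K\<^sup>2 / c\<^sup>2)"
  have "norm (p q2 - p q1) \<le> Lp * norm (q2 - q1)" for q1 q2
  proof -
    define s where "s = q2 - q1"
    define r where "r = p q2 - p q1"
    have "0 \<le> vcat s r \<bullet> (M *v vcat s r)"
      using dmm unfolding delta_MM_def Let_def s_def r_def by blast
    also have "\<dots> = s \<bullet> (blk1 M *v s) + s \<bullet> (blk2 M *v r) + r \<bullet> (blk3 M *v s) + r \<bullet> (blk4 M *v r)"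
      by (simp add: T_mult_vcat inner_vcat inner_add_right)
    finally have 1: "0 \<le> s \<bullet> (blk1 M *v s) + s \<bullet> (blk2 M *v r) + r \<bullet> (blk3 M *v s) + r \<bullet> (blk4 M *v r)" .
    have 2: "c * (norm r)\<^sup>2 \<le> - (r \<bullet> (blk4 M *v r))" using c(2)[of r] by (simp add: mv_uminus_l)
    have 3: "s \<bullet> (blk1 M *v s) \<le> K1 * (norm s)\<^sup>2" using K1(2)[of s s] by (simp add: power2_eq_square mult_ac)
    have 4: "s \<bullet> (blk2 M *v r) + r \<bullet> (blk3 M *v s) \<le> K * norm s * norm r"
      using K2(2)[of s r] K3(2)[of r s] by (simp add: K_def algebra_simps)
    have 5: "c * (norm r)\<^sup>2 \<le> K1 * (norm s)\<^sup>2 + K * norm s * norm r" using 1 2 3 4 by linarith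
    have 6: "K * norm s * norm r \<le> c / 2 * (norm r)\<^sup>2 + K\<^sup>2 / (2 * c) * (norm s)\<^sup>2"
    proof -
      have "0 \<le> (c * norm r - K * norm s)\<^sup>2" by simp
      then have "2 * c * (K * norm s * norm r) \<le> c\<^sup>2 * (norm r)\<^sup>2 + K\<^sup>2 * (norm s)\<^sup>2"
        by (simp add: power2_eq_square algebra_simps)
      then show ?thesis using c(1) by (simp add: field_simps power2_eq_square)
    qed
    have "(norm r)\<^sup>2 \<le> (2 * K1 / c + K\<^sup>2 / c\<^sup>2) * (norm s)\<^sup>2"
    proof -
      have "c / 2 * (norm r)\<^sup>2 \<le> (K1 + K\<^sup>2 / (2 * c)) * (norm s)\<^sup>2" using 5 6 by (simp add: algebra_simps)
      then show ?thesis using c(1) by (simp add: field_simps power2_eq_square)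
    qed
    then have "sqrt ((norm r)\<^sup>2) \<le> sqrt ((2 * K1 / c + K\<^sup>2 / c\<^sup>2) * (norm s)\<^sup>2)" by (rule real_sqrt_le_mono)
    then show ?thesis by (simp add: Lp_def r_def s_def real_sqrt_mult)
  qed
  moreover have "Lp \<ge> 0" using c K1 by (simp add: Lp_def)
  ultimately show ?thesis by blast
qed

(* from Comp.thy *)
lemma comparison:
  fixes y :: "real \<Rightarrow> 'a::euclidean_space" and w :: "real \<Rightarrow> 'b::real_normed_vector"
    and F :: "'a \<Rightarrow> 'b \<Rightarrow> 'a" and H :: "'a \<Rightarrow> 'a"
  assumes H: "bounded_linear H" and Hs: "\<And>a b. inner a (H b) = inner (H a) b"
    and FL: "\<And>a b v. norm (F a v - F b v) \<le> LF * norm (a - b)"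
    and FG: "\<And>a v. norm (F a v) \<le> KF * (norm a + norm v)"
    and diss: "\<And>a v. 2 * inner (H a) (F a v) \<le> - \<alpha> * inner a (H a) + m * (norm v)\<^sup>2"
    and wb: "\<And>s. s \<ge> 0 \<Longrightarrow> norm (w s) \<le> Wb"
    and sol: "\<And>t. t \<ge> 0 \<Longrightarrow> ((\<lambda>s. F (y s) (w s)) has_integral (y t - y 0)) {0..t}"
    and \<alpha>: "\<alpha> > 0" and m: "m \<ge> 0" and T: "T \<ge> 0"
  shows "inner (y T) (H (y T)) \<le> exp (- \<alpha> * T) * inner (y 0) (H (y 0)) + m * Wb\<^sup>2 / \<alpha>"
proof -
  define f where "f = (\<lambda>s. F (y s) (w s))"
  define V where "V = (\<lambda>a. inner a (H a))"
  define c where "c = m * Wb\<^sup>2"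
  have Wb0: "Wb \<ge> 0" using wb[of 0] norm_ge_zero[of "w 0"] by linarith
  have c0: "c \<ge> 0" using m by (simp add: c_def)
  have intsub: "(f has_integral (y t - y s)) {s..t}" if "0 \<le> s" "s \<le> t" for s t
  proof -
    have ft: "(f has_integral (y t - y 0)) {0..t}" using sol[of t] that by (simp add: f_def)
    have fs: "(f has_integral (y s - y 0)) {0..s}" using sol[of s] that by (simp add: f_def)
    have "integral {0..s} f + integral {s..t} f = integral {0..t} f"
      using Henstock_Kurzweil_Integration.integral_combine[OF that(1) that(2)] ft by blast
    then have "integral {s..t} f = y t - y s" using ft fs by (simp add: integral_unique algebra_simps)
    moreover have "f integrable_on {s..t}" using integrable_subinterval_real[of f 0 t s t] ft that by auto
    ultimately show ?thesis by (simp add: has_integral_integrable_integral)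
  qed
  define T1 where "T1 = T + 1"
  have "continuous_on {0..T1} (\<lambda>s. y 0 + integral {0..s} f)"
    using sol[of T1] T by (intro continuous_intros indefinite_integral_continuous_1) (auto simp: f_def T1_def)
  moreover have "y 0 + integral {0..s} f = y s" if "s \<in> {0..T1}" for s
    using sol[of s] that by (simp add: f_def integral_unique)
  ultimately have ycont: "continuous_on {0..T1} y" by (rule continuous_on_eq) simp
  have "bounded (y ` {0..T1})" by (intro compact_imp_bounded compact_continuous_image ycont) simp
  then obtain By0 where By0: "\<And>s. s \<in> {0..T1} \<Longrightarrow> norm (y s) \<le> By0" unfolding bounded_iff by (metis atLeastAtMost_iff image_eqI)
  define By where "By = max By0 0"
  have By: "\<And>s. s \<in> {0..T1} \<Longrightarrow> norm (y s) \<le> By" "By \<ge> 0" using By0 by (force simp: By_def)+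
  define Mf where "Mf = \<bar>KF\<bar> * (By + Wb)"
  have Mf0: "Mf \<ge> 0" using By Wb0 by (simp add: Mf_def)
  have fb: "norm (f s) \<le> Mf" if "s \<in> {0..T1}" for s
  proof -
    have "norm (f s) \<le> KF * (norm (y s) + norm (w s))" by (simp add: f_def FG)
    also have "\<dots> \<le> \<bar>KF\<bar> * (norm (y s) + norm (w s))" by (simp add: mult_right_mono)
    also have "\<dots> \<le> \<bar>KF\<bar> * (By + Wb)" using By(1)[OF that] wb[of s] that by (intro mult_left_mono add_mono) auto
    finally show ?thesis by (simp add: Mf_def)
  qed
  have ylip: "norm (y t - y s) \<le> Mf * (t - s)" if "0 \<le> s" "s \<le> t" "t \<le> T1" for s t
  proof -
    have "norm (y t - y s) \<le> Mf * Henstock_Kurzweil_Integration.content (cbox s t)"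
      using intsub[OF that(1,2)] fb that by (intro has_integral_bound[OF Mf0]) auto
    then show ?thesis using that by simp
  qed
  obtain KH where KH: "KH > 0" "\<And>v. norm (H v) \<le> KH * norm v"
    using bounded_linear.pos_bounded[OF H] by (auto simp: mult.commute)
  define C where "C = 2 * KH * By * \<bar>LF\<bar> * Mf + KH * Mf\<^sup>2"
  have C0: "C \<ge> 0" using KH By Mf0 by (simp add: C_def)
  have step: "V (y (s + h)) \<le> V (y s) + h * (- \<alpha> * V (y s) + c) + C * h\<^sup>2"
    if s: "0 \<le> s" "s \<le> T" and h: "0 \<le> h" "h \<le> 1" for s h
  proof -
    define t where "t = s + h"
    have st: "0 \<le> s" "s \<le> t" "t \<le> T1" using s h by (auto simp: t_def T1_def)
    define d where "d = y t - y s"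
    have dn: "norm d \<le> Mf * h" using ylip[OF st] by (simp add: d_def t_def)
    have lin: "linear H" using H by (rule bounded_linear.linear)
    have "V (y t) = V (y s + d)" by (simp add: d_def)
    also have "\<dots> = V (y s) + 2 * inner (H (y s)) d + V d"
      unfolding V_def using lin by (simp add: linear_add inner_add_left inner_add_right Hs[of "y s" d] inner_commute[of d])
    finally have e1: "V (y t) = V (y s) + 2 * inner (H (y s)) d + V d" .
    have "V d \<le> norm d * norm (H d)" unfolding V_def by (metis Cauchy_Schwarz_ineq2 abs_le_D1)
    also have "\<dots> \<le> norm d * (KH * norm d)" by (intro mult_left_mono KH(2)) simp
    also have "\<dots> = KH * (norm d)\<^sup>2" by (simp add: power2_eq_square)
    also have "\<dots> \<le> KH * (Mf * h)\<^sup>2" using dn KH by (intro mult_left_mono power_mono) auto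
    finally have e2: "V d \<le> KH * Mf\<^sup>2 * h\<^sup>2" by (simp add: power_mult_distrib)
    define g where "g = (\<lambda>r. 2 * inner (H (y s)) (f r))"
    have gi: "(g has_integral (2 * inner (H (y s)) d)) {s..t}"
    proof -
      have "bounded_linear (\<lambda>v. 2 * inner (H (y s)) v)"
        by (intro bounded_linear_const_mult bounded_linear_inner_right)
      from has_integral_linear[OF intsub[OF st(1,2)] this] show ?thesis by (simp add: g_def d_def o_def)
    qed
    have gb: "g r \<le> - \<alpha> * V (y s) + c + 2 * KH * By * \<bar>LF\<bar> * Mf * h" if r: "r \<in> {s..t}" for r
    proof -
      have r0: "0 \<le> r" "s \<le> r" "r \<le> T1" using r st by auto
      have "g r = 2 * inner (H (y s)) (F (y s) (w r)) + 2 * inner (H (y s)) (F (y r) (w r) - F (y s) (w r))"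
        by (simp add: g_def f_def inner_diff_right)
      also have "2 * inner (H (y s)) (F (y s) (w r)) \<le> - \<alpha> * V (y s) + m * (norm (w r))\<^sup>2"
        using diss by (simp add: V_def)
      also have "m * (norm (w r))\<^sup>2 \<le> c" unfolding c_def using m wb[of r] r0
        by (intro mult_left_mono power_mono) auto
      also have "inner (H (y s)) (F (y r) (w r) - F (y s) (w r)) \<le> norm (H (y s)) * norm (F (y r) (w r) - F (y s) (w r))"
        by (metis Cauchy_Schwarz_ineq2 abs_le_D1)
      also have "\<dots> \<le> (KH * By) * (\<bar>LF\<bar> * (Mf * h))"
      proof (intro mult_mono)
        show "norm (H (y s)) \<le> KH * By" using KH(2)[of "y s"] By(1)[of s] st KH(1)
          by (smt (verit) atLeastAtMost_iff mult_left_mono)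
        have "norm (F (y r) (w r) - F (y s) (w r)) \<le> LF * norm (y r - y s)" by (rule FL)
        also have "\<dots> \<le> \<bar>LF\<bar> * norm (y r - y s)" by (simp add: mult_right_mono)
        also have "\<dots> \<le> \<bar>LF\<bar> * (Mf * (r - s))" using ylip[of s r] r0 st by (intro mult_left_mono) auto
        also have "\<dots> \<le> \<bar>LF\<bar> * (Mf * h)" using r t_def Mf0 by (intro mult_left_mono) auto
        finally show "norm (F (y r) (w r) - F (y s) (w r)) \<le> \<bar>LF\<bar> * (Mf * h)" .
      qed (use KH By in auto)
      finally show ?thesis by (simp add: algebra_simps)
    qed
    have "2 * inner (H (y s)) d \<le> Henstock_Kurzweil_Integration.content {s..t} *\<^sub>R (- \<alpha> * V (y s) + c + 2 * KH * By * \<bar>LF\<bar> * Mf * h)"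
      by (rule has_integral_le[OF gi has_integral_const_real gb])
    also have "\<dots> = h * (- \<alpha> * V (y s) + c) + 2 * KH * By * \<bar>LF\<bar> * Mf * h\<^sup>2"
      using st by (simp add: t_def algebra_simps power2_eq_square)
    finally have e3: "2 * inner (H (y s)) d \<le> h * (- \<alpha> * V (y s) + c) + 2 * KH * By * \<bar>LF\<bar> * Mf * h\<^sup>2" .
    show ?thesis using e1 e2 e3 unfolding t_def C_def by (simp add: algebra_simps)
  qed
  have iter: "V (y (real k * (T / real n))) \<le> (1 - \<alpha> * (T / real n)) ^ k * V (y 0) + (c + C * (T / real n)) / \<alpha>"
    if n: "n > 0" "T / real n \<le> 1" "\<alpha> * (T / real n) \<le> 1" and k: "k \<le> n" for n k
    using k
  proof (induction k)
    case 0 then show ?case using c0 C0 T \<alpha> n by (simp add: divide_nonneg_pos)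
  next
    case (Suc k)
    define h where "h = T / real n"
    have h0: "0 \<le> h" using T by (simp add: h_def)
    have kh: "0 \<le> real k * h" "real k * h \<le> T"
    proof -
      show "0 \<le> real k * h" using h0 by simp
      have "real k * h \<le> real n * h" using Suc.prems h0 by (intro mult_right_mono) auto
      also have "\<dots> = T" using n by (simp add: h_def)
      finally show "real k * h \<le> T" .
    qed
    have IH: "V (y (real k * h)) \<le> (1 - \<alpha> * h) ^ k * V (y 0) + (c + C * h) / \<alpha>"
      using Suc by (simp add: h_def)
    have "V (y (real (Suc k) * h)) = V (y (real k * h + h))" by (simp add: algebra_simps)
    also have "\<dots> \<le> V (y (real k * h)) + h * (- \<alpha> * V (y (real k * h)) + c) + C * h\<^sup>2"
      using step[OF kh h0] n by (simp add: h_def)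
    also have "\<dots> = (1 - \<alpha> * h) * V (y (real k * h)) + h * (c + C * h)" by (simp add: algebra_simps power2_eq_square)
    also have "\<dots> \<le> (1 - \<alpha> * h) * ((1 - \<alpha> * h) ^ k * V (y 0) + (c + C * h) / \<alpha>) + h * (c + C * h)"
      using IH n by (intro add_right_mono mult_left_mono) (auto simp: h_def)
    also have "\<dots> = (1 - \<alpha> * h) ^ Suc k * V (y 0) + (c + C * h) / \<alpha>"
      using \<alpha> by (simp add: field_simps)
    finally show ?case by (simp add: h_def)
  qed
  show ?thesis
  proof (cases "T = 0")
    case True then show ?thesis using c0 \<alpha> by (simp add: V_def c_def)
  next
    case False
    then have Tp: "T > 0" using T by simp
    have lim: "(\<lambda>n. (1 + (- \<alpha> * T) / real n) ^ n * V (y 0) + (c + C * (T / real n)) / \<alpha>)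
       \<longlonglongrightarrow> exp (- \<alpha> * T) * V (y 0) + (c + C * 0) / \<alpha>"
      by (intro tendsto_intros tendsto_exp_limit_sequentially tendsto_divide_0[OF tendsto_const] filterlim_real_sequentially) (use \<alpha> in simp)
    obtain N :: nat where N: "N \<ge> T" "N \<ge> \<alpha> * T" by (meson max.bounded_iff real_nat_ceiling_ge)
    have "V (y T) \<le> (1 + (- \<alpha> * T) / real n) ^ n * V (y 0) + (c + C * (T / real n)) / \<alpha>" if "n \<ge> N + 1" for n
    proof -
      have n0: "n > 0" "real n > 0" using that by auto
      have "T \<le> real n" "\<alpha> * T \<le> real n" using that N by auto
      then have "T / real n \<le> 1" "\<alpha> * (T / real n) \<le> 1" using n0 by (auto simp: field_simps)
      from iter[OF n0(1) this order_refl] n0 show ?thesis by (simp add: field_simps)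
    qed
    then have "\<exists>N. \<forall>n\<ge>N. V (y T) \<le> (1 + (- \<alpha> * T) / real n) ^ n * V (y 0) + (c + C * (T / real n)) / \<alpha>"
      by blast
    from LIMSEQ_le_const[OF lim this] have "V (y T) \<le> exp (- \<alpha> * T) * V (y 0) + (c + C * 0) / \<alpha>" .
    then show ?thesis by (simp add: V_def c_def)
  qed
qed

(* from Lipf.thy *)
definition mn :: "real^'n^'m \<Rightarrow> real" where
  "mn M = (SOME K. K > 0 \<and> (\<forall>v. norm (M *v v) \<le> K * norm v))"

lemma mn: "mn M > 0" "norm (M *v v) \<le> mn M * norm v"
proof -
  have "\<exists>K. K > 0 \<and> (\<forall>v. norm (M *v v) \<le> K * norm v)" using mat_bound[of M] by blast
  then have "mn M > 0 \<and> (\<forall>v. norm (M *v v) \<le> mn M * norm v)" unfolding mn_def by (rule someI_ex)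
  then show "mn M > 0" "norm (M *v v) \<le> mn M * norm v" by auto
qed

definition lip :: "('a::real_normed_vector \<Rightarrow> 'b::real_normed_vector) \<Rightarrow> bool" where
  "lip f \<longleftrightarrow> (\<exists>L. \<forall>a b. norm (f a - f b) \<le> L * norm (a - b))"

lemma lipE: assumes "lip f" obtains L where "L \<ge> 0" "\<And>a b. norm (f a - f b) \<le> L * norm (a - b)"
proof -
  obtain L where L: "\<And>a b. norm (f a - f b) \<le> L * norm (a - b)" using assms by (auto simp: lip_def)
  have "norm (f a - f b) \<le> \<bar>L\<bar> * norm (a - b)" for a b
    using L[of a b] mult_right_mono[OF abs_ge_self[of L] norm_ge_zero[of "a - b"]] by linarith
  then show ?thesis using that[of "\<bar>L\<bar>"] by auto
qed

lemma norm_fst_le': "norm (fst d) \<le> norm d" using norm_fst_le[of "fst d" "snd d"] by simp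
lemma norm_snd_le': "norm (snd d) \<le> norm d" using norm_snd_le[of "snd d" "fst d"] by simp

lemma lip_const: "lip (\<lambda>_. c)" unfolding lip_def by (rule exI[of _ 0]) simp
lemma lip_id: "lip (\<lambda>z. z)" unfolding lip_def by (rule exI[of _ 1]) simp

lemma lip_fst: assumes lf: "lip f" shows "lip (\<lambda>z. fst (f z))"
proof -
  obtain L where "L \<ge> 0" and L: "\<And>a b. norm (f a - f b) \<le> L * norm (a - b)" using lipE[OF lf] by metis
  have "norm (fst (f a) - fst (f b)) \<le> L * norm (a - b)" for a b
  proof -
    have "norm (fst (f a) - fst (f b)) = norm (fst (f a - f b))" by simp
    also have "\<dots> \<le> norm (f a - f b)" by (rule norm_fst_le')
    also have "\<dots> \<le> L * norm (a - b)" by (rule L)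
    finally show ?thesis .
  qed
  then show ?thesis unfolding lip_def by blast
qed

lemma lip_snd: assumes lf: "lip f" shows "lip (\<lambda>z. snd (f z))"
proof -
  obtain L where "L \<ge> 0" and L: "\<And>a b. norm (f a - f b) \<le> L * norm (a - b)" using lipE[OF lf] by metis
  have "norm (snd (f a) - snd (f b)) \<le> L * norm (a - b)" for a b
  proof -
    have "norm (snd (f a) - snd (f b)) = norm (snd (f a - f b))" by simp
    also have "\<dots> \<le> norm (f a - f b)" by (rule norm_snd_le')
    also have "\<dots> \<le> L * norm (a - b)" by (rule L)
    finally show ?thesis .
  qed
  then show ?thesis unfolding lip_def by blast
qed

lemma lip_add: assumes lf: "lip f" and lg: "lip g" shows "lip (\<lambda>z. f z + g z)"
proof -
  obtain L1 where "L1 \<ge> 0" and L1: "\<And>a b. norm (f a - f b) \<le> L1 * norm (a - b)" using lipE[OF lf] by metis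
  obtain L2 where "L2 \<ge> 0" and L2: "\<And>a b. norm (g a - g b) \<le> L2 * norm (a - b)" using lipE[OF lg] by metis
  have "norm ((f a + g a) - (f b + g b)) \<le> (L1 + L2) * norm (a - b)" for a b
  proof -
    have e: "(f a + g a) - (f b + g b) = (f a - f b) + (g a - g b)" by (simp add: algebra_simps)
    have "norm ((f a + g a) - (f b + g b)) \<le> norm (f a - f b) + norm (g a - g b)"
      unfolding e by (rule norm_triangle_ineq)
    also have "\<dots> \<le> L1 * norm (a - b) + L2 * norm (a - b)" by (rule add_mono[OF L1 L2])
    also have "\<dots> = (L1 + L2) * norm (a - b)" by (rule distrib_right[symmetric])
    finally show ?thesis .
  qed
  then show ?thesis unfolding lip_def by blast
qed

lemma lip_minus: assumes lf: "lip f" shows "lip (\<lambda>z. - f z)"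
proof -
  obtain L where "L \<ge> 0" and L: "\<And>a b. norm (f a - f b) \<le> L * norm (a - b)" using lipE[OF lf] by metis
  have "norm (- f a - - f b) \<le> L * norm (a - b)" for a b
  proof -
    have "- f a - - f b = - (f a - f b)" by simp
    then have "norm (- f a - - f b) = norm (f a - f b)" by (simp only: norm_minus_cancel)
    then show ?thesis using L[of a b] by simp
  qed
  then show ?thesis unfolding lip_def by blast
qed

lemma lip_diff: assumes "lip f" "lip g" shows "lip (\<lambda>z. f z - g z)"
proof -
  have "lip (\<lambda>z. f z + - g z)" by (intro lip_add lip_minus assms)
  then show ?thesis by (simp only: diff_conv_add_uminus)
qed

lemma lip_mat: fixes M :: "real^'n::finite^'m::finite" and f :: "'a::real_normed_vector \<Rightarrow> real^'n"
  assumes lf: "lip f" shows "lip (\<lambda>z. M *v f z)"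
proof -
  obtain L where "L \<ge> 0" and L: "\<And>a b. norm (f a - f b) \<le> L * norm (a - b)" using lipE[OF lf] by metis
  have "norm (M *v f a - M *v f b) \<le> (mn M * L) * norm (a - b)" for a b
  proof -
    have "norm (M *v f a - M *v f b) = norm (M *v (f a - f b))" by (simp add: matrix_vector_mult_diff_distrib)
    also have "\<dots> \<le> mn M * norm (f a - f b)" by (rule mn)
    also have "\<dots> \<le> mn M * (L * norm (a - b))" using mn(1)[of M] L by (intro mult_left_mono) auto
    finally show ?thesis by simp
  qed
  then show ?thesis unfolding lip_def by blast
qed

lemma lip_comp: fixes p :: "'b::real_normed_vector \<Rightarrow> 'c::real_normed_vector" and f :: "'a::real_normed_vector \<Rightarrow> 'b"
  assumes "\<And>a b. norm (p a - p b) \<le> Lp * norm (a - b)" "Lp \<ge> 0" "lip f"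
  shows "lip (\<lambda>z. p (f z))"
proof -
  obtain L where "L \<ge> 0" and L: "\<And>a b. norm (f a - f b) \<le> L * norm (a - b)" using lipE[OF assms(3)] by metis
  have "norm (p (f a) - p (f b)) \<le> (Lp * L) * norm (a - b)" for a b
    using assms(1)[of "f a" "f b"] mult_left_mono[OF L[of a b] assms(2)] by simp
  then show ?thesis unfolding lip_def by blast
qed

lemma lip_pair: assumes lf: "lip f" and lg: "lip g" shows "lip (\<lambda>z. (f z, g z))"
proof -
  obtain L1 where "L1 \<ge> 0" and L1: "\<And>a b. norm (f a - f b) \<le> L1 * norm (a - b)" using lipE[OF lf] by metis
  obtain L2 where "L2 \<ge> 0" and L2: "\<And>a b. norm (g a - g b) \<le> L2 * norm (a - b)" using lipE[OF lg] by metis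
  have "norm ((f a, g a) - (f b, g b)) \<le> (L1 + L2) * norm (a - b)" for a b
  proof -
    have "norm ((f a, g a) - (f b, g b)) \<le> norm (f a - f b) + norm (g a - g b)"
      using norm_Pair_le[of "f a - f b" "g a - g b"] by simp
    then show ?thesis using L1[of a b] L2[of a b] by (simp add: algebra_simps)
  qed
  then show ?thesis unfolding lip_def by blast
qed

lemma has_integral_pair:
  assumes "(f has_integral i) S" "(g has_integral j) S"
  shows "((\<lambda>s. (f s, g s)) has_integral (i, j)) S"
proof -
  have 1: "((\<lambda>s. (f s, 0)) has_integral (i, 0)) S"
    using has_integral_linear[OF assms(1) bounded_linear_Pair[OF bounded_linear_ident bounded_linear_zero]] by (simp add: o_def)
  have 2: "((\<lambda>s. (0, g s)) has_integral (0, j)) S"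
    using has_integral_linear[OF assms(2) bounded_linear_Pair[OF bounded_linear_zero bounded_linear_ident]] by (simp add: o_def)
  from has_integral_add[OF 1 2] show ?thesis by simp
qed

(* from Final.thy *)
theorem theorem1:
  fixes A :: "real^'x^'x" and B :: "real^'u^'x" and E :: "real^'p^'x" and Ew :: "real^'w^'x"
    and C :: "real^'x^'y" and D :: "real^'u^'y" and Fw :: "real^'w^'y" and Cq :: "real^'x^'q"
    and p :: "real^'q \<Rightarrow> real^'p"
    and N1 N2 :: "((real^'q^'q) \<times> (real^'p^'p)) set"
    and T1 T2 :: "real^('q + 'p)^('q + 'p)"
    and \<alpha>1 \<alpha>2 \<mu>1 \<mu>2 :: real
    and R1 :: "real^'y^'x" and R2 :: "real^'y^'q" and R3 :: "real^'x^'u" and R4 :: "real^'p^'u"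
    and P1 P2 :: "real^'x^'x" and X1 X2 :: "real^'q^'q" and Y1 Y2 :: "real^'p^'p"
    and K1 :: "real^'x^'u" and K2 :: "real^'p^'u" and L1 :: "real^'y^'q" and L2 :: "real^'y^'x"
  assumes p0: "p 0 = 0"
    and A1: "assumption_A1 p N1 T1"
    and A2: "assumption_A2 p N2 T2"
    and M24: "neg_def (blk4 (transpose T2 ** blk (matrix_inv X2) 0 0 (- matrix_inv Y2) ** T2))"
    and pos: "\<alpha>1 > 0" "\<alpha>2 > 0" "\<mu>1 > 0" "\<mu>2 > 0"
    and P1: "pos_def P1" and P2: "pos_def P2"
    and X1: "pos_def X1" and Y1: "sym_mat Y1"
    and X2: "pos_def X2" and Y2: "pos_def Y2"
    and N1: "(X1, Y1) \<in> N1" and N2: "(X2, Y2) \<in> N2"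
    and LMI1: "neg_semidef (LMI1 A E Ew C Fw Cq T1 \<alpha>1 \<mu>1 P1 R1 R2 X1 Y1)"
    and LMI2: "neg_semidef (LMI2 A B E Ew Cq T2 \<alpha>2 \<mu>2 P2 R3 R4 X2 Y2)"
    and L1: "L1 = matrix_inv (Gam1 T1) ** matrix_inv X1 ** R2"
    and L2: "L2 = matrix_inv P1 ** R1 + E ** matrix_inv (blk4 T1) ** blk3 T1 ** L1"
    and K1: "K1 = R3 ** matrix_inv P2 + K2 ** matrix_inv (blk4 T2) ** blk3 T2 ** Cq"
    and K2: "K2 = R4 ** matrix_inv Y2 ** blk4 T2"
  shows "ISS_wrt (closed_loop_sol A B E Ew C Fw Cq p K1 K2 L1 L2)"

proof -
  \<comment> \<open>basic facts\<close>
  have dmm2: "delta_MM p (transpose T2 ** blk (matrix_inv X2) 0 0 (- matrix_inv Y2) ** T2)"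
    using A2 N2 by (auto simp: assumption_A2_def)
  obtain Lp where Lp0: "Lp \<ge> 0" and pL: "\<And>q1 q2. norm (p q2 - p q1) \<le> Lp * norm (q2 - q1)"
    using p_lipschitz[OF dmm2 M24] by blast
  have pL': "\<And>a b. norm (p a - p b) \<le> Lp * norm (a - b)" using pL by blast
  define Q where "Q = matrix_inv P2"
  have P2i: "invertible P2" using P2 by (rule pos_def_invertible)
  have P1s: "sym_mat P1" using P1 by (simp add: pos_def_def)
  have Qs: "sym_mat Q" unfolding Q_def using P2i P2 by (intro sym_inv) (auto simp: pos_def_def)
  have Qpos: "0 < v \<bullet> (Q *v v)" if "v \<noteq> 0" for v
  proof -
    define u where "u = Q *v v"
    have vu: "v = P2 *v u" by (simp add: u_def Q_def inv_vec1[OF P2i])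
    have "u \<noteq> 0" using that vu by auto
    then have "0 < u \<bullet> (P2 *v u)" using P2 by (simp add: pos_def_def)
    also have "u \<bullet> (P2 *v u) = u \<bullet> v" using vu by simp
    also have "\<dots> = v \<bullet> (Q *v v)" by (simp add: u_def inner_commute)
    finally show ?thesis .
  qed
  obtain lQ where lQ: "lQ > 0" "\<And>v. lQ * (norm v)\<^sup>2 \<le> v \<bullet> (Q *v v)" using quad_lower[of Q] Qpos by blast
  obtain l1 where l1: "l1 > 0" "\<And>v. l1 * (norm v)\<^sup>2 \<le> v \<bullet> (P1 *v v)"
    using quad_lower[of P1] P1 by (auto simp: pos_def_def)
  have quad_up: "v \<bullet> (M *v v) \<le> mn M * (norm v)\<^sup>2" for M :: "real^'x^'x" and v
  proof -
    have "v \<bullet> (M *v v) \<le> norm v * norm (M *v v)" by (metis Cauchy_Schwarz_ineq2 abs_le_D1)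
    also have "\<dots> \<le> norm v * (mn M * norm v)" by (intro mult_left_mono mn) simp
    finally show ?thesis by (simp add: power2_eq_square mult_ac)
  qed
  \<comment> \<open>right-hand side\<close>
  define FX where "FX = (\<lambda>x e v. (A + B ** K1) *v x + (E + B ** K2) *v p (Cq *v x)
      - B *v (K1 *v e - K2 *v (p (Cq *v (x - e)) - p (Cq *v x))) + Ew *v v)"
  define FE where "FE = (\<lambda>x e v. (A + L2 ** C) *v e - E *v (p (Cq *v x + (- ((Cq + L1 ** C) *v e) - L1 *v (Fw *v v))) - p (Cq *v x))
      + (Ew + L2 ** Fw) *v v)"
  define F where "F = (\<lambda>(a :: (real^'x) \<times> (real^'x)) (v :: real^'w). (FX (fst a) (snd a) v, FE (fst a) (snd a) v))"
  have lipF: "lip (\<lambda>z. F (fst z) (snd z))"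
    unfolding F_def FX_def FE_def
    by (intro lip_pair lip_add lip_diff lip_minus lip_mat lip_comp[OF pL' Lp0] lip_fst lip_snd lip_id lip_const)
  then obtain LF where LF: "\<And>a b. norm (F (fst a) (snd a) - F (fst b) (snd b)) \<le> LF * norm (a - b)"
    using lipF unfolding lip_def by blast
  have F0: "F 0 0 = 0" by (simp add: F_def FX_def FE_def p0 zero_prod_def)
  have FL: "norm (F a v - F b v) \<le> LF * norm (a - b)" for a b v
    using LF[of "(a, v)" "(b, v)"] by simp
  have FG: "norm (F a v) \<le> \<bar>LF\<bar> * (norm a + norm v)" for a v
  proof -
    have "norm (F a v) = norm (F a v - F 0 0)" by (simp add: F0)
    also have "\<dots> \<le> LF * norm ((a, v) - (0, 0))" using LF[of "(a, v)" "(0, 0)"] by simp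
    also have "\<dots> \<le> \<bar>LF\<bar> * norm (a, v)" by (simp add: mult_right_mono)
    also have "\<dots> \<le> \<bar>LF\<bar> * (norm a + norm v)" by (intro mult_left_mono norm_Pair_le) simp
    finally show ?thesis .
  qed
  \<comment> \<open>Lyapunov function\<close>
  define G0 where "G0 = mn Q * mn B * (mn K1 + mn K2 * Lp * mn Cq)"
  define \<epsilon> where "\<epsilon> = \<alpha>2 * lQ / 2"
  define D where "D = G0\<^sup>2 / \<epsilon>"
  define \<kappa> where "\<kappa> = 2 * D / (\<alpha>1 * l1) + 1"
  define \<alpha> where "\<alpha> = min \<alpha>1 \<alpha>2 / 2"
  define m where "m = \<mu>2 + \<kappa> * \<mu>1"
  have \<epsilon>0: "\<epsilon> > 0" using pos lQ by (simp add: \<epsilon>_def)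
  have D0: "D \<ge> 0" using \<epsilon>0 by (simp add: D_def)
  have \<kappa>0: "\<kappa> > 0"
  proof -
    have "0 \<le> 2 * D / (\<alpha>1 * l1)" using D0 pos l1 by (intro divide_nonneg_pos) auto
    then show ?thesis by (simp add: \<kappa>_def)
  qed
  have \<alpha>0: "\<alpha> > 0" using pos by (simp add: \<alpha>_def)
  have m0: "m \<ge> 0" using pos \<kappa>0 by (simp add: m_def)
  define H where "H = (\<lambda>a :: (real^'x) \<times> (real^'x). (Q *v fst a, \<kappa> *\<^sub>R (P1 *v snd a)))"
  have Hbl: "bounded_linear H"
    unfolding H_def
    by (intro bounded_linear_Pair bounded_linear_compose[OF matrix_vector_mul_bounded_linear] bounded_linear_fst bounded_linear_snd
        bounded_linear_compose[OF bounded_linear_scaleR_right])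
  have Hs: "inner a (H b) = inner (H a) b" for a b
  proof -
    obtain a1 a2 b1 b2 where ab: "a = (a1, a2)" "b = (b1, b2)" by (cases a, cases b)
    then show ?thesis using sym_inner[OF Qs, of a1 b1] sym_inner[OF P1s, of a2 b2] by (simp add: H_def)
  qed
  have diss: "2 * inner (H a) (F a v) \<le> - \<alpha> * inner a (H a) + m * (norm v)\<^sup>2" for a v
  proof -
    obtain x e where a: "a = (x, e)" by (cases a)
    define dk where "dk = K1 *v e - K2 *v (p (Cq *v (x - e)) - p (Cq *v x))"
    define G where "G = (A + B ** K1) *v x + (E + B ** K2) *v p (Cq *v x) + Ew *v v"
    have FXe: "FX x e v = G - B *v dk" by (simp add: FX_def G_def dk_def algebra_simps)
    have ctrl: "2 * ((Q *v x) \<bullet> G) + \<alpha>2 * (x \<bullet> (Q *v x)) - \<mu>2 * (v \<bullet> v) \<le> 0"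
      unfolding G_def Q_def by (rule ctrl_ineq[OF p0 A2 P2 X2 Y2 N2 LMI2 K1 K2])
    have obs: "2 * ((P1 *v e) \<bullet> FE x e v) + \<alpha>1 * (e \<bullet> (P1 *v e)) - \<mu>1 * (v \<bullet> v) \<le> 0"
      unfolding FE_def by (rule obs_ineq[OF A1 P1 X1 Y1 N1 LMI1 L1 L2])
    have dkb: "norm dk \<le> (mn K1 + mn K2 * Lp * mn Cq) * norm e"
    proof -
      have "norm (p (Cq *v (x - e)) - p (Cq *v x)) \<le> Lp * norm (Cq *v (x - e) - Cq *v x)" by (rule pL')
      also have "Cq *v (x - e) - Cq *v x = - (Cq *v e)" by (simp add: matrix_vector_mult_diff_distrib)
      also have "Lp * norm (- (Cq *v e)) \<le> Lp * (mn Cq * norm e)" using Lp0 mn(2)[of Cq e] by (simp add: mult_left_mono)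
      finally have 1: "norm (p (Cq *v (x - e)) - p (Cq *v x)) \<le> Lp * (mn Cq * norm e)" .
      have "norm dk \<le> norm (K1 *v e) + norm (K2 *v (p (Cq *v (x - e)) - p (Cq *v x)))"
        unfolding dk_def by (rule norm_triangle_ineq4)
      also have "\<dots> \<le> mn K1 * norm e + mn K2 * norm (p (Cq *v (x - e)) - p (Cq *v x))" by (intro add_mono mn)
      also have "\<dots> \<le> mn K1 * norm e + mn K2 * (Lp * (mn Cq * norm e))"
        using 1 mn(1)[of K2] mn(1)[of K1] by (intro add_mono mult_left_mono) auto
      finally show ?thesis by (simp add: algebra_simps)
    qed
    have cross: "- ((Q *v x) \<bullet> (B *v dk)) \<le> G0 * norm x * norm e"
    proof -
      have "- ((Q *v x) \<bullet> (B *v dk)) \<le> norm (Q *v x) * norm (B *v dk)"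
        by (metis Cauchy_Schwarz_ineq2 abs_le_D2)
      also have "\<dots> \<le> (mn Q * norm x) * (mn B * ((mn K1 + mn K2 * Lp * mn Cq) * norm e))"
      proof (intro mult_mono)
        show "norm (B *v dk) \<le> mn B * ((mn K1 + mn K2 * Lp * mn Cq) * norm e)"
          using mn(2)[of B dk] dkb mn(1)[of B] by (meson mult_left_mono order_trans less_imp_le)
      qed (use mn(1)[of Q] mn(2)[of Q x] in auto)
      finally show ?thesis by (simp add: G0_def mult_ac)
    qed
    have young: "2 * (G0 * norm x * norm e) \<le> \<epsilon> * (norm x)\<^sup>2 + D * (norm e)\<^sup>2"
    proof -
      have "0 \<le> (\<epsilon> * norm x - G0 * norm e)\<^sup>2" by simp
      then have "2 * \<epsilon> * (G0 * norm x * norm e) \<le> \<epsilon>\<^sup>2 * (norm x)\<^sup>2 + G0\<^sup>2 * (norm e)\<^sup>2"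
        by (simp add: power2_eq_square algebra_simps)
      then show ?thesis using \<epsilon>0 by (simp add: D_def field_simps power2_eq_square)
    qed
    have qx: "\<epsilon> * (norm x)\<^sup>2 \<le> \<alpha>2 / 2 * (x \<bullet> (Q *v x))"
      using mult_left_mono[OF lQ(2)[of x], of "\<alpha>2 / 2"] pos by (simp add: \<epsilon>_def mult_ac)
    have Y0: "0 \<le> e \<bullet> (P1 *v e)" using l1(2)[of e] l1(1) by (smt (verit) mult_nonneg_nonneg zero_le_power2)
    have X0: "0 \<le> x \<bullet> (Q *v x)" using lQ(2)[of x] lQ(1) by (smt (verit) mult_nonneg_nonneg zero_le_power2)
    have pe: "D * (norm e)\<^sup>2 \<le> (\<kappa> * \<alpha>1 / 2) * (e \<bullet> (P1 *v e))"
    proof -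
      have "D * (norm e)\<^sup>2 = (D / l1) * (l1 * (norm e)\<^sup>2)" using l1 by simp
      also have "\<dots> \<le> (D / l1) * (e \<bullet> (P1 *v e))" using D0 l1 by (intro mult_left_mono l1(2)) auto
      also have "\<dots> \<le> (\<kappa> * \<alpha>1 / 2) * (e \<bullet> (P1 *v e))"
      proof (rule mult_right_mono[OF _ Y0])
        have "\<kappa> * \<alpha>1 / 2 = D / l1 + \<alpha>1 / 2" using pos l1 by (simp add: \<kappa>_def field_simps)
        then show "D / l1 \<le> \<kappa> * \<alpha>1 / 2" using pos by simp
      qed
      finally show ?thesis .
    qed
    have kobs: "\<kappa> * (2 * ((P1 *v e) \<bullet> FE x e v)) \<le> \<kappa> * (\<mu>1 * (v \<bullet> v) - \<alpha>1 * (e \<bullet> (P1 *v e)))"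
      using obs \<kappa>0 by (intro mult_left_mono) auto
    have amX: "\<alpha> * (x \<bullet> (Q *v x)) \<le> \<alpha>2 / 2 * (x \<bullet> (Q *v x))"
      by (intro mult_right_mono X0) (simp add: \<alpha>_def)
    have amY: "\<alpha> * (\<kappa> * (e \<bullet> (P1 *v e))) \<le> \<alpha>1 / 2 * (\<kappa> * (e \<bullet> (P1 *v e)))"
      using \<kappa>0 Y0 by (intro mult_right_mono) (auto simp: \<alpha>_def)
    have vv: "v \<bullet> v = (norm v)\<^sup>2" by (simp add: dot_square_norm)
    have lhs: "2 * inner (H a) (F a v) = 2 * ((Q *v x) \<bullet> G) - 2 * ((Q *v x) \<bullet> (B *v dk)) + \<kappa> * (2 * ((P1 *v e) \<bullet> FE x e v))"
      by (simp add: a H_def F_def FXe inner_diff_right algebra_simps)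
    have rhs: "- \<alpha> * inner a (H a) + m * (norm v)\<^sup>2 = - (\<alpha> * (x \<bullet> (Q *v x))) - \<alpha> * (\<kappa> * (e \<bullet> (P1 *v e))) + \<mu>2 * (norm v)\<^sup>2 + \<kappa> * (\<mu>1 * (norm v)\<^sup>2)"
      by (simp add: a H_def m_def algebra_simps)
    have kk: "\<kappa> * (\<mu>1 * (v \<bullet> v) - \<alpha>1 * (e \<bullet> (P1 *v e))) = \<kappa> * (\<mu>1 * (norm v)\<^sup>2) - 2 * ((\<kappa> * \<alpha>1 / 2) * (e \<bullet> (P1 *v e)))"
      by (simp add: vv algebra_simps)
    have kk2: "\<alpha>1 / 2 * (\<kappa> * (e \<bullet> (P1 *v e))) = (\<kappa> * \<alpha>1 / 2) * (e \<bullet> (P1 *v e))" by (simp add: algebra_simps)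
    have h1: "\<alpha>2 / 2 * (x \<bullet> (Q *v x)) = (\<alpha>2 * (x \<bullet> (Q *v x))) / 2" by simp
    have h2: "\<mu>2 * (v \<bullet> v) = \<mu>2 * (norm v)\<^sup>2" by (simp add: vv)
    show ?thesis unfolding lhs rhs
      using ctrl kobs cross young qx pe amX amY kk kk2 h1 h2 by linarith
  qed
  \<comment> \<open>ISS\<close>
  define lam where "lam = min lQ (\<kappa> * l1)"
  define Lam where "Lam = max (mn Q) (\<kappa> * mn P1)"
  define c1 where "c1 = sqrt (Lam / lam)"
  define c2 where "c2 = sqrt (m / (\<alpha> * lam)) + 1"
  define \<beta> where "\<beta> = (\<lambda>r t. c1 * r * exp (- (\<alpha> / 2) * t))"
  define \<gamma> where "\<gamma> = (\<lambda>s::real. c2 * s)"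
  have lam0: "lam > 0" using lQ l1 \<kappa>0 by (simp add: lam_def)
  have Lam0: "Lam > 0" using mn(1)[of Q] by (simp add: Lam_def)
  have c10: "c1 > 0" using lam0 Lam0 by (simp add: c1_def)
  have c20: "c2 > 0"
  proof -
    have "0 \<le> m / (\<alpha> * lam)" using m0 \<alpha>0 lam0 by simp
    then show ?thesis by (simp add: c2_def add_nonneg_pos)
  qed
  have Wlow: "lam * (norm y)\<^sup>2 \<le> inner y (H y)" for y
  proof -
    obtain x e where y: "y = (x, e)" by (cases y)
    have "lam * (norm y)\<^sup>2 = lam * (norm x)\<^sup>2 + lam * (norm e)\<^sup>2" by (simp add: y norm_Pair algebra_simps)
    also have "\<dots> \<le> lQ * (norm x)\<^sup>2 + (\<kappa> * l1) * (norm e)\<^sup>2"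
      by (intro add_mono mult_right_mono) (auto simp: lam_def)
    also have "\<dots> \<le> x \<bullet> (Q *v x) + \<kappa> * (e \<bullet> (P1 *v e))"
    proof -
      have "\<kappa> * (l1 * (norm e)\<^sup>2) \<le> \<kappa> * (e \<bullet> (P1 *v e))" using l1(2)[of e] \<kappa>0 by (intro mult_left_mono) auto
      then show ?thesis using lQ(2)[of x] by (simp add: mult.assoc)
    qed
    also have "\<dots> = inner y (H y)" by (simp add: y H_def)
    finally show ?thesis .
  qed
  have Wup: "inner y (H y) \<le> Lam * (norm y)\<^sup>2" for y
  proof -
    obtain x e where y: "y = (x, e)" by (cases y)
    have "inner y (H y) = x \<bullet> (Q *v x) + \<kappa> * (e \<bullet> (P1 *v e))" by (simp add: y H_def)
    also have "\<dots> \<le> mn Q * (norm x)\<^sup>2 + \<kappa> * (mn P1 * (norm e)\<^sup>2)"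
      using quad_up[of x Q] quad_up[of e P1] \<kappa>0 by (intro add_mono mult_left_mono) auto
    also have "\<dots> \<le> Lam * (norm x)\<^sup>2 + Lam * (norm e)\<^sup>2"
    proof (intro add_mono)
      show "mn Q * (norm x)\<^sup>2 \<le> Lam * (norm x)\<^sup>2" by (intro mult_right_mono) (auto simp: Lam_def)
      have "\<kappa> * mn P1 * (norm e)\<^sup>2 \<le> Lam * (norm e)\<^sup>2" by (intro mult_right_mono) (auto simp: Lam_def)
      then show "\<kappa> * (mn P1 * (norm e)\<^sup>2) \<le> Lam * (norm e)\<^sup>2" by (simp add: mult.assoc)
    qed
    also have "\<dots> = Lam * (norm y)\<^sup>2" by (simp add: y norm_Pair algebra_simps)
    finally show ?thesis .
  qed
  have Kc: "class_K (\<lambda>r. c * r)" if "c > 0" for c :: real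
    unfolding class_K_def using that
    by (auto intro!: continuous_intros strict_mono_onI)
  have K: "class_K \<gamma>" unfolding \<gamma>_def using c20 by (rule Kc)
  have explim: "((\<lambda>t. exp (- (\<alpha> / 2) * t)) \<longlongrightarrow> 0) at_top"
  proof -
    have "filterlim (\<lambda>t::real. (- (\<alpha> / 2)) * t) at_bot at_top"
      by (rule filterlim_tendsto_neg_mult_at_bot[OF tendsto_const _ filterlim_ident]) (use \<alpha>0 in simp)
    from filterlim_compose[OF exp_at_bot this] show ?thesis by (simp add: o_def)
  qed
  have KL: "class_KL \<beta>"
    unfolding class_KL_def
  proof (intro conjI allI impI)
    show "continuous_on ({0..} \<times> {0..}) (\<lambda>(r, t). \<beta> r t)"
      unfolding \<beta>_def by (simp add: split_beta) (intro continuous_intros, auto)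
    fix t :: real assume "0 \<le> t"
    show "class_K (\<lambda>r. \<beta> r t)" unfolding \<beta>_def using Kc[of "c1 * exp (- (\<alpha> / 2) * t)"] c10
      by (simp add: mult_ac)
  next
    fix r s t :: real assume r: "0 \<le> r" and "0 \<le> s" "s \<le> t"
    then have "exp (- (\<alpha> / 2) * t) \<le> exp (- (\<alpha> / 2) * s)" using \<alpha>0 by simp
    then show "\<beta> r t \<le> \<beta> r s" unfolding \<beta>_def using c10 r by (intro mult_left_mono) auto
  next
    fix r :: real assume r: "0 \<le> r"
    show "(\<beta> r \<longlongrightarrow> 0) at_top" unfolding \<beta>_def using tendsto_mult_right_zero[OF explim, of "c1 * r"] by simp
  qed
  have bound: "norm (x t, e t) \<le> \<beta> (norm (x 0, e 0)) t + \<gamma> (SUP s\<in>{0..}. norm (w s))"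
    if bw: "bounded (w ` {0..})" and sol: "closed_loop_sol A B E Ew C Fw Cq p K1 K2 L1 L2 w x e" and t: "t \<ge> 0" for w x e t
  proof -
    define Wb where "Wb = (SUP s\<in>{0..}. norm (w s))"
    obtain Bw where Bw: "\<And>z. z \<in> w ` {0..} \<Longrightarrow> norm z \<le> Bw" using bw unfolding bounded_iff by blast
    have bdd: "bdd_above ((\<lambda>s. norm (w s)) ` {0..})" by (rule bdd_aboveI2[where M=Bw]) (use Bw in auto)
    have wb: "norm (w s) \<le> Wb" if "s \<ge> 0" for s
      unfolding Wb_def using that bdd by (intro cSUP_upper) auto
    have Wb0: "Wb \<ge> 0" using wb[of 0] norm_ge_zero[of "w 0"] by linarith
    have solu: "((\<lambda>s. FX (x s) (e s) (w s)) has_integral (x t' - x 0)) {0..t'} \<and>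
                ((\<lambda>s. FE (x s) (e s) (w s)) has_integral (e t' - e 0)) {0..t'}" if "t' \<ge> 0" for t'
      using sol that unfolding closed_loop_sol_def Let_def FX_def FE_def by simp
    have soly: "((\<lambda>s. F (x s, e s) (w s)) has_integral ((x t', e t') - (x 0, e 0))) {0..t'}" if "t' \<ge> 0" for t'
      using has_integral_pair[OF conjunct1[OF solu[OF that]] conjunct2[OF solu[OF that]]] by (simp add: F_def)
    have cmp: "inner (x t, e t) (H (x t, e t)) \<le> exp (- \<alpha> * t) * inner (x 0, e 0) (H (x 0, e 0)) + m * Wb\<^sup>2 / \<alpha>"
      using comparison[where y = "\<lambda>s. (x s, e s)" and w = w and F = F and H = H, OF Hbl Hs FL FG diss wb soly \<alpha>0 m0 t] .
    define n0 where "n0 = norm (x 0, e 0)"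
    define nt where "nt = norm (x t, e t)"
    define u where "u = exp (- (\<alpha> / 2) * t) * n0"
    have u0: "u \<ge> 0" by (simp add: u_def n0_def)
    have expsq: "exp (- \<alpha> * t) = (exp (- (\<alpha> / 2) * t))\<^sup>2"
      by (simp add: power2_eq_square exp_add[symmetric])
    have "lam * nt\<^sup>2 \<le> exp (- \<alpha> * t) * (Lam * n0\<^sup>2) + m * Wb\<^sup>2 / \<alpha>"
      using Wlow[of "(x t, e t)"] Wup[of "(x 0, e 0)"] cmp unfolding nt_def n0_def
      by (smt (verit) exp_gt_zero mult_left_mono)
    moreover have ueq: "Lam * u\<^sup>2 = exp (- \<alpha> * t) * (Lam * n0\<^sup>2)"
      unfolding u_def power_mult_distrib expsq[symmetric] by (simp only: mult_ac)
    ultimately have "lam * nt\<^sup>2 \<le> Lam * u\<^sup>2 + m * Wb\<^sup>2 / \<alpha>" by (simp only: ueq)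
    then have "nt\<^sup>2 \<le> (Lam / lam) * u\<^sup>2 + (m / (\<alpha> * lam)) * Wb\<^sup>2"
      using lam0 \<alpha>0 by (simp add: field_simps)
    then have "sqrt (nt\<^sup>2) \<le> sqrt ((Lam / lam) * u\<^sup>2 + (m / (\<alpha> * lam)) * Wb\<^sup>2)" by (rule real_sqrt_le_mono)
    also have "\<dots> \<le> sqrt ((Lam / lam) * u\<^sup>2) + sqrt ((m / (\<alpha> * lam)) * Wb\<^sup>2)"
      using lam0 Lam0 \<alpha>0 m0 by (intro sqrt_add_le_add_sqrt) auto
    also have "\<dots> = c1 * u + sqrt (m / (\<alpha> * lam)) * Wb"
    proof -
      have sq: "sqrt (a * z\<^sup>2) = sqrt a * z" if "z \<ge> 0" for a z :: real using that by (simp add: real_sqrt_mult)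
      show ?thesis by (simp only: sq[OF u0] sq[OF Wb0] c1_def)
    qed
    also have "\<dots> \<le> c1 * u + c2 * Wb"
      using Wb0 by (intro add_left_mono mult_right_mono) (auto simp: c2_def)
    finally show ?thesis by (simp add: nt_def \<beta>_def \<gamma>_def u_def n0_def Wb_def mult_ac)
  qed
  show ?thesis unfolding ISS_wrt_def using KL K bound by blast
qed

end
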